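(* Let $T>0$ and consider the one-dimensional Gaussian process $X=(\langle f_t,\cdot\rangle)_{0\le t\le T}$ on the white noise space, with $f_t\in L^2(\mathbb R,dx)$, $0\le t\le T$. Write $f(t,s):=f_t-f_s$ for $0\le s,t\le T$ and assume that $0<\|f(t,s)\|\le M$ for $dt\,ds$-a.e. $(t,s)\in[0,T]^2$, for some $M<\infty$. Then the self-intersection local time $\int_0^T\int_0^t\delta(X_t-X_s)\,ds\,dt$ of $X$ is an element of $\mathcal D^{1,2}$ if \[ \int_0^T\!\int_0^{t_1}\!\int_0^T\!\int_0^{t_2}\Big(\|f(t_1,s_1)\|^2\|f(t_2,s_2)\|^2-\langle f(t_1,s_1),f(t_2,s_2)\rangle^2\Big)^{-\frac32}ds_2\,dt_2\,ds_1\,dt_1<\infty . \]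
   Context: The white noise space is $(\mathcal S',\mu)$, $\mu$ the Gaussian measure on the tempered distributions with $\int e^{i\langle\xi,x\rangle}d\mu=e^{-\|\xi\|^2/2}$, $\|\cdot\|$ and $\langle\cdot,\cdot\rangle$ the norm and inner product (dual pairing) of $L^2(\mathbb R,dx)$. Generalized functions are chaos series $\Phi=\sum_n\langle\Phi^{(n)},:\cdot^{\otimes n}:\rangle$ (Wick-ordered monomials / multiple Wiener integrals) with $S$-transform $S\Phi(\xi)=\sum_n\langle\Phi^{(n)},\xi^{\otimes n}\rangle$, $\xi\in\mathcal S_{\mathbb C}$; a Hida distribution is determined by its $S$-transform. For $0\ne g\in L^2(\mathbb R)$, Donsker's delta $\delta(\langle g,\cdot\rangle)$ is the Hida distribution with $S\delta(\langle g,\cdot\rangle)(\xi)=\frac{1}{\sqrt{2\pi}\|g\|}\exp\big(-\frac{\langle\xi,g\rangle^2}{2\|g\|^2}\big)$, and $\delta(X_t-X_s):=\delta(\langle f(t,s),\cdot\rangle)$. The self-intersection local time $\int_0^T\int_0^t\delta(X_t-X_s)\,ds\,dt$ is defined as a Bochner integral in a suitable Hilbert space of Hida distributions; its $S$-transform is $\xi\mapsto\int_0^T\int_0^tS\delta(\langle f(t,s),\cdot\rangle)(\xi)\,ds\,dt$. For $\alpha\in\mathbb R$, $\mathcal D^{\alpha,2}$ consists of chaos series with square-integrable symmetric kernels $\Phi^{(n)}$ and $\sum_n(1+n^\alpha)\,n!\,\|\Phi^{(n)}\|^2<\infty$; $\mathcal D^{1,2}$ is the usual space of once Malliavin differentiable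 square-integrable random variables. *)

theory Defs
  imports "HOL-Probability.Probability" "HOL-Combinatorics.Permutations"
begin

definition L2 :: "(real \<Rightarrow> real) \<Rightarrow> bool" where
  "L2 g \<longleftrightarrow> g \<in> borel_measurable lborel \<and> integrable lborel (\<lambda>x. (g x)\<^sup>2)"

definition l2inner :: "(real \<Rightarrow> real) \<Rightarrow> (real \<Rightarrow> real) \<Rightarrow> real" where
  "l2inner g h = (\<integral>x. g x * h x \<partial>lborel)"

definition l2norm :: "(real \<Rightarrow> real) \<Rightarrow> real" where
  "l2norm g = sqrt (\<integral>x. (g x)\<^sup>2 \<partial>lborel)"

definition cpair :: "(real \<Rightarrow> complex) \<Rightarrow> (real \<Rightarrow> real) \<Rightarrow> complex" where
  "cpair \<xi> g = (\<integral>x. \<xi> x * complex_of_real (g x) \<partial>lborel)"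

definition schwartzC :: "(real \<Rightarrow> complex) \<Rightarrow> bool" where
  "schwartzC \<xi> \<longleftrightarrow> (\<exists>D :: nat \<Rightarrow> real \<Rightarrow> complex. D 0 = \<xi> \<and>
     (\<forall>m x. (D m has_vector_derivative D (Suc m) x) (at x)) \<and>
     (\<forall>k m. \<exists>C. \<forall>x. \<bar>x\<bar> ^ k * norm (D m x) \<le> C))"

abbreviation Rn :: "nat \<Rightarrow> (nat \<Rightarrow> real) measure" where
  "Rn n \<equiv> Pi\<^sub>M {..<n} (\<lambda>_. lborel)"

definition sym_L2_kernel :: "nat \<Rightarrow> ((nat \<Rightarrow> real) \<Rightarrow> real) \<Rightarrow> bool" where
  "sym_L2_kernel n \<Phi> \<longleftrightarrow> \<Phi> \<in> borel_measurable (Rn n) \<and>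
     integrable (Rn n) (\<lambda>x. (\<Phi> x)\<^sup>2) \<and>
     (\<forall>\<pi>. \<pi> permutes {..<n} \<longrightarrow> (\<forall>x\<in>space (Rn n). \<Phi> (x \<circ> \<pi>) = \<Phi> x))"

definition knorm2 :: "nat \<Rightarrow> ((nat \<Rightarrow> real) \<Rightarrow> real) \<Rightarrow> real" where
  "knorm2 n \<Phi> = (\<integral>x. (\<Phi> x)\<^sup>2 \<partial>Rn n)"

definition tensor_pair :: "nat \<Rightarrow> ((nat \<Rightarrow> real) \<Rightarrow> real) \<Rightarrow> (real \<Rightarrow> complex) \<Rightarrow> complex" where
  "tensor_pair n \<Phi> \<xi> = (\<integral>x. complex_of_real (\<Phi> x) * (\<Prod>i<n. \<xi> (x i)) \<partial>Rn n)"

text \<open>A Hida distribution is identified with its S-transform (it is determined by it).\<close>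
definition in_D :: "real \<Rightarrow> ((real \<Rightarrow> complex) \<Rightarrow> complex) \<Rightarrow> bool" where
  "in_D \<alpha> F \<longleftrightarrow> (\<exists>\<Phi> :: nat \<Rightarrow> (nat \<Rightarrow> real) \<Rightarrow> real.
     (\<forall>n. sym_L2_kernel n (\<Phi> n)) \<and>
     summable (\<lambda>n. (1 + real n powr \<alpha>) * fact n * knorm2 n (\<Phi> n)) \<and>
     (\<forall>\<xi>. schwartzC \<xi> \<longrightarrow> (\<lambda>n. tensor_pair n (\<Phi> n) \<xi>) sums F \<xi>))"

definition S_donsker :: "(real \<Rightarrow> real) \<Rightarrow> (real \<Rightarrow> complex) \<Rightarrow> complex" where
  "S_donsker g \<xi> = complex_of_real (1 / (sqrt (2 * pi) * l2norm g)) *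
      exp (- (cpair \<xi> g)\<^sup>2 / complex_of_real (2 * (l2norm g)\<^sup>2))"

definition fdiff :: "(real \<Rightarrow> real \<Rightarrow> real) \<Rightarrow> real \<Rightarrow> real \<Rightarrow> real \<Rightarrow> real" where
  "fdiff f t s = (\<lambda>x. f t x - f s x)"

definition simplex2 :: "real \<Rightarrow> (real \<times> real) set" where
  "simplex2 T = {(t, s). 0 \<le> s \<and> s \<le> t \<and> t \<le> T}"

definition sil_integrand :: "(real \<Rightarrow> real \<Rightarrow> real) \<Rightarrow> (real \<Rightarrow> complex) \<Rightarrow> real \<times> real \<Rightarrow> complex" where
  "sil_integrand f \<xi> = (\<lambda>(t, s). S_donsker (fdiff f t s) \<xi>)"

text \<open>S-transform of int_0^T int_0^t delta(X_t - X_s) ds dt.\<close>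
definition S_SIL :: "real \<Rightarrow> (real \<Rightarrow> real \<Rightarrow> real) \<Rightarrow> (real \<Rightarrow> complex) \<Rightarrow> complex" where
  "S_SIL T f \<xi> = set_lebesgue_integral (lborel \<Otimes>\<^sub>M lborel) (simplex2 T) (sil_integrand f \<xi>)"

definition gram_integrand :: "(real \<Rightarrow> real \<Rightarrow> real) \<Rightarrow> (real \<times> real) \<times> (real \<times> real) \<Rightarrow> ennreal" where
  "gram_integrand f = (\<lambda>((t1, s1), (t2, s2)).
     let a = fdiff f t1 s1; b = fdiff f t2 s2;
         G = (l2norm a)\<^sup>2 * (l2norm b)\<^sup>2 - (l2inner a b)\<^sup>2
     in if G > 0 then ennreal (G powr (-3/2)) else \<infinity>)"

end

theory Submission
  imports Defs "HOL-Analysis.Generalised_Binomial_Theorem" "HOL-Probability.Sinc_Integral"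
begin

lemma L2_integrable_mult:
  assumes "L2 g" "L2 h"
  shows "integrable lborel (\<lambda>x. g x * h x)"
proof -
  have m: "g \<in> borel_measurable lborel" "h \<in> borel_measurable lborel"
    using assms by (auto simp: L2_def)
  have i: "integrable lborel (\<lambda>x. (g x)\<^sup>2 + (h x)\<^sup>2)"
    using assms by (auto simp: L2_def)
  show ?thesis
  proof (rule Bochner_Integration.integrable_bound[OF i])
    show "(\<lambda>x. g x * h x) \<in> borel_measurable lborel" using m by measurable
    show "AE x in lborel. norm (g x * h x) \<le> norm ((g x)\<^sup>2 + (h x)\<^sup>2)"
    proof
      fix x
      have "2 * \<bar>g x * h x\<bar> \<le> (g x)\<^sup>2 + (h x)\<^sup>2"
        using sum_squares_bound[of "\<bar>g x\<bar>" "\<bar>h x\<bar>"] by (simp add: abs_mult)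
      then show "norm (g x * h x) \<le> norm ((g x)\<^sup>2 + (h x)\<^sup>2)" by auto
    qed
  qed
qed

lemma L2_zero_AE:
  assumes "L2 g" "l2norm g = 0"
  shows "AE x in lborel. g x = 0"
proof -
  have "(\<integral>x. (g x)\<^sup>2 \<partial>lborel) = 0"
    using assms by (simp add: l2norm_def)
  then have "AE x in lborel. (g x)\<^sup>2 = 0"
    using assms by (subst (asm) integral_nonneg_eq_0_iff_AE) (auto simp: L2_def)
  then show ?thesis by auto
qed

lemma l2norm_nonneg: "l2norm g \<ge> 0"
  by (simp add: l2norm_def integral_nonneg_AE)

lemma l2norm_sq: "(l2norm g)\<^sup>2 = (\<integral>x. (g x)\<^sup>2 \<partial>lborel)"
  by (simp add: l2norm_def integral_nonneg_AE)

lemma L2_CS: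
  assumes "L2 g" "L2 h"
  shows "(\<integral>x. \<bar>g x * h x\<bar> \<partial>lborel) \<le> l2norm g * l2norm h"
proof (cases "l2norm g = 0 \<or> l2norm h = 0")
  case True
  then have "AE x in lborel. \<bar>g x * h x\<bar> = 0"
    using L2_zero_AE[OF assms(1)] L2_zero_AE[OF assms(2)] by auto
  then have "(\<integral>x. \<bar>g x * h x\<bar> \<partial>lborel) = 0"
    by (simp add: integral_eq_zero_AE)
  then show ?thesis using l2norm_nonneg[of g] l2norm_nonneg[of h] by simp
next
  case False
  define a where "a = l2norm g"
  define b where "b = l2norm h"
  have a: "a > 0" and b: "b > 0" using False l2norm_nonneg[of g] l2norm_nonneg[of h]
    by (auto simp: a_def b_def)
  have ig: "integrable lborel (\<lambda>x. (g x)\<^sup>2)" and ih: "integrable lborel (\<lambda>x. (h x)\<^sup>2)"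
    using assms by (auto simp: L2_def)
  have igh: "integrable lborel (\<lambda>x. \<bar>g x * h x\<bar>)"
    using L2_integrable_mult[OF assms] by simp
  have pt: "\<bar>g x * h x\<bar> \<le> (b / a * (g x)\<^sup>2 + a / b * (h x)\<^sup>2) / 2" for x
  proof -
    define u where "u = \<bar>g x\<bar>"
    define v where "v = \<bar>h x\<bar>"
    have "0 \<le> (b * u - a * v)\<^sup>2" by simp
    then have "2 * a * b * (u * v) \<le> b\<^sup>2 * u\<^sup>2 + a\<^sup>2 * v\<^sup>2" by (simp add: power2_eq_square algebra_simps)
    then have "u * v \<le> (b\<^sup>2 * u\<^sup>2 + a\<^sup>2 * v\<^sup>2) / (2 * a * b)" using a b by (simp add: field_simps)
    also have "\<dots> = (b / a * u\<^sup>2 + a / b * v\<^sup>2) / 2" using a b by (simp add: field_simps power2_eq_square)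
    finally show ?thesis by (simp add: u_def v_def abs_mult)
  qed
  have "(\<integral>x. \<bar>g x * h x\<bar> \<partial>lborel) \<le> (\<integral>x. (b / a * (g x)\<^sup>2 + a / b * (h x)\<^sup>2) / 2 \<partial>lborel)"
    using pt igh ig ih by (intro integral_mono) auto
  also have "\<dots> = (b / a * a\<^sup>2 + a / b * b\<^sup>2) / 2"
    using ig ih by (simp add: a_def b_def l2norm_sq)
  also have "\<dots> = a * b" using a b by (simp add: power2_eq_square field_simps)
  finally show ?thesis by (simp add: a_def b_def)
qed

definition Ap :: "(real \<Rightarrow> real \<Rightarrow> real) \<Rightarrow> real \<times> real \<Rightarrow> real \<Rightarrow> real" where
  "Ap f p = fdiff f (fst p) (snd p)"

definition Np :: "(real \<Rightarrow> real \<Rightarrow> real) \<Rightarrow> real \<times> real \<Rightarrow> real" where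
  "Np f p = l2norm (Ap f p)"

lemma Ap_meas:
  assumes fm: "(\<lambda>(t, x). f t x) \<in> borel_measurable (lborel \<Otimes>\<^sub>M lborel)"
    and h: "h \<in> N \<rightarrow>\<^sub>M (lborel \<Otimes>\<^sub>M lborel)" and k: "k \<in> N \<rightarrow>\<^sub>M borel"
  shows "(\<lambda>z. Ap f (h z) (k z)) \<in> borel_measurable N"
proof -
  have k': "k \<in> N \<rightarrow>\<^sub>M lborel" using k by simp
  have 1: "(\<lambda>z. (\<lambda>(t, x). f t x) (fst (h z), k z)) \<in> borel_measurable N"
    by (rule measurable_compose[OF _ fm]) (use h k' in measurable)
  have 2: "(\<lambda>z. (\<lambda>(t, x). f t x) (snd (h z), k z)) \<in> borel_measurable N"
    by (rule measurable_compose[OF _ fm]) (use h k' in measurable)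
  show ?thesis using borel_measurable_diff[OF 1 2] by (simp add: Ap_def fdiff_def)
qed

lemma Np_meas:
  assumes fm: "(\<lambda>(t, x). f t x) \<in> borel_measurable (lborel \<Otimes>\<^sub>M lborel)"
  shows "Np f \<in> borel_measurable (lborel \<Otimes>\<^sub>M lborel)"
proof -
  have "(\<lambda>(p, y). (Ap f p y)\<^sup>2) \<in> borel_measurable ((lborel \<Otimes>\<^sub>M lborel) \<Otimes>\<^sub>M lborel)"
    using Ap_meas[OF fm, of fst "(lborel \<Otimes>\<^sub>M lborel) \<Otimes>\<^sub>M lborel" snd]
    by (simp add: case_prod_beta')
  then have "(\<lambda>p. \<integral>y. (Ap f p y)\<^sup>2 \<partial>lborel) \<in> borel_measurable (lborel \<Otimes>\<^sub>M lborel)"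
    by (rule lborel.borel_measurable_lebesgue_integral)
  then show ?thesis unfolding Np_def l2norm_def by measurable
qed

lemma simplex2_sub: "simplex2 T \<subseteq> {0..T} \<times> {0..T}"
  by (auto simp: simplex2_def)

lemma simplex2_sets[measurable]: "simplex2 T \<in> sets (lborel \<Otimes>\<^sub>M lborel)"
proof -
  have "simplex2 T = {p \<in> space (lborel \<Otimes>\<^sub>M lborel). 0 \<le> snd p \<and> snd p \<le> fst p \<and> fst p \<le> T}"
    by (auto simp: simplex2_def space_pair_measure)
  also have "\<dots> \<in> sets (lborel \<Otimes>\<^sub>M lborel)" by measurable
  finally show ?thesis .
qed

lemma simplex2_finite: "emeasure (lborel \<Otimes>\<^sub>M lborel) (simplex2 T) < \<infinity>"
proof -
  have "emeasure (lborel \<Otimes>\<^sub>M lborel) (simplex2 T) \<le> emeasure (lborel \<Otimes>\<^sub>M lborel) ({0..T} \<times> {0..T})"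
    by (intro emeasure_mono simplex2_sub) auto
  also have "\<dots> = emeasure lborel {0..T} * emeasure lborel {0..T}"
    by (rule lborel.emeasure_pair_measure_Times) auto
  also have "\<dots> < \<infinity>"
    by (cases "0 \<le> T") (auto simp: ennreal_mult_less_top)
  finally show ?thesis .
qed

lemma L2_Ap:
  assumes fL2: "\<forall>t\<in>{0..T}. L2 (f t)" and p: "p \<in> {0..T} \<times> {0..T}"
  shows "L2 (Ap f p)"
proof -
  have a: "L2 (f (fst p))" "L2 (f (snd p))" using fL2 p by auto
  have m: "Ap f p \<in> borel_measurable lborel"
    using a by (auto simp: L2_def Ap_def fdiff_def)
  have "integrable lborel (\<lambda>x. 2 * (f (fst p) x)\<^sup>2 + 2 * (f (snd p) x)\<^sup>2)"
    using a by (auto simp: L2_def)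
  then have "integrable lborel (\<lambda>x. (Ap f p x)\<^sup>2)"
  proof (rule Bochner_Integration.integrable_bound)
    show "(\<lambda>x. (Ap f p x)\<^sup>2) \<in> borel_measurable lborel" using m by measurable
    show "AE x in lborel. norm ((Ap f p x)\<^sup>2) \<le> norm (2 * (f (fst p) x)\<^sup>2 + 2 * (f (snd p) x)\<^sup>2)"
    proof (intro AE_I2)
      fix x
      define a where "a = f (fst p) x"
      define b where "b = f (snd p) x"
      have ab: "0 \<le> (a + b)\<^sup>2" by simp
      have "norm ((Ap f p x)\<^sup>2) = (a - b)\<^sup>2" by (simp add: Ap_def fdiff_def a_def b_def)
      also have "\<dots> \<le> 2 * a\<^sup>2 + 2 * b\<^sup>2" using ab by (simp add: power2_eq_square algebra_simps)
      also have "\<dots> \<le> norm (2 * a\<^sup>2 + 2 * b\<^sup>2)" by simp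
      finally show "norm ((Ap f p x)\<^sup>2) \<le> norm (2 * (f (fst p) x)\<^sup>2 + 2 * (f (snd p) x)\<^sup>2)"
        by (simp add: a_def b_def)
    qed
  qed
  then show ?thesis using m by (simp add: L2_def)
qed

interpretation MMs: sigma_finite_measure "lborel \<Otimes>\<^sub>M lborel :: (real \<times> real) measure"
  by (simp add: lborel_prod lborel.sigma_finite_measure_axioms)

lemma nn_integral_pair_prod:
  fixes g :: "'a \<Rightarrow> ennreal" and h :: "'b \<Rightarrow> ennreal"
  assumes "sigma_finite_measure M"
    and [measurable]: "g \<in> borel_measurable M1" "h \<in> borel_measurable M"
  shows "(\<integral>\<^sup>+ z. g (fst z) * h (snd z) \<partial>(M1 \<Otimes>\<^sub>M M)) = (\<integral>\<^sup>+ x. g x \<partial>M1) * (\<integral>\<^sup>+ y. h y \<partial>M)"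
proof -
  interpret sigma_finite_measure M by fact
  have "(\<integral>\<^sup>+ z. g (fst z) * h (snd z) \<partial>(M1 \<Otimes>\<^sub>M M)) = (\<integral>\<^sup>+ x. \<integral>\<^sup>+ y. g x * h y \<partial>M \<partial>M1)"
    by (subst nn_integral_fst[symmetric]) auto
  also have "\<dots> = (\<integral>\<^sup>+ x. g x * (\<integral>\<^sup>+ y. h y \<partial>M) \<partial>M1)"
    by (simp add: nn_integral_cmult)
  also have "\<dots> = (\<integral>\<^sup>+ x. g x \<partial>M1) * (\<integral>\<^sup>+ y. h y \<partial>M)"
    by (simp add: nn_integral_multc)
  finally show ?thesis .
qed

lemma gram_integrand_eq:
  "gram_integrand f (p, q) =
    (let G = (Np f p)\<^sup>2 * (Np f q)\<^sup>2 - (l2inner (Ap f p) (Ap f q))\<^sup>2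
     in if G > 0 then ennreal (G powr (-3/2)) else \<infinity>)"
  by (cases p; cases q) (simp add: gram_integrand_def Np_def Ap_def Let_def)

lemma powr_neg32:
  fixes x :: real assumes "x > 0"
  shows "(x\<^sup>2) powr (-3/2) = inverse (x ^ 3)"
proof -
  have "(x\<^sup>2) powr (-3/2) = (x powr 2) powr (-3/2)"
    using assms by (simp add: powr_realpow)
  also have "\<dots> = x powr (- 3)" by (simp add: powr_powr)
  also have "\<dots> = inverse (x ^ 3)" using assms by (simp add: powr_minus powr_realpow[of x 3, simplified])
  finally show ?thesis .
qed

lemma gram_lower:
  "ennreal (inverse (Np f p) ^ 3) * ennreal (inverse (Np f q) ^ 3) \<le> gram_integrand f (p, q)"
proof -
  define G where "G = (Np f p)\<^sup>2 * (Np f q)\<^sup>2 - (l2inner (Ap f p) (Ap f q))\<^sup>2"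
  show ?thesis
  proof (cases "G > 0")
    case False
    then show ?thesis by (simp add: gram_integrand_eq G_def[symmetric] Let_def)
  next
    case True
    define P where "P = Np f p * Np f q"
    have "G \<le> P\<^sup>2" by (simp add: G_def P_def power_mult_distrib)
    with True have P2: "P\<^sup>2 > 0" by linarith
    have P: "P > 0" using P2 l2norm_nonneg[of "Ap f p"] l2norm_nonneg[of "Ap f q"]
      by (simp add: P_def Np_def)
    have "(P\<^sup>2) powr (-3/2) \<le> G powr (-3/2)"
      using True \<open>G \<le> P\<^sup>2\<close> by (intro powr_mono2') auto
    then have "inverse (P ^ 3) \<le> G powr (-3/2)" using powr_neg32[OF P] by simp
    moreover have "inverse (Np f p) ^ 3 * inverse (Np f q) ^ 3 = inverse (P ^ 3)"
      by (simp add: P_def power_mult_distrib power_inverse)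
    ultimately have "ennreal (inverse (Np f p) ^ 3) * ennreal (inverse (Np f q) ^ 3) \<le> ennreal (G powr (-3/2))"
      by (subst ennreal_mult[symmetric]) (auto simp: Np_def l2norm_nonneg intro!: ennreal_leI)
    then show ?thesis using True
      by (simp add: gram_integrand_eq G_def[symmetric] Let_def)
  qed
qed

lemma inv_le_aux: assumes "(u::real) \<ge> 0" shows "u \<le> 1 + u ^ 3"
proof (cases "u \<le> 1")
  case False
  then have "u * 1 \<le> u * u\<^sup>2" using assms by (intro mult_left_mono) (auto simp: power2_eq_square intro: order_trans[of _ u])
  then show ?thesis by (simp add: power3_eq_cube power2_eq_square)
next
  case True
  then show ?thesis using zero_le_power[OF assms, of 3] by linarith
qed

lemma MMsf: "sigma_finite_measure (lborel \<Otimes>\<^sub>M lborel :: (real \<times> real) measure)"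
  by (simp add: lborel_prod lborel.sigma_finite_measure_axioms)

lemma I1_finite:
  assumes fm: "(\<lambda>(t, x). f t x) \<in> borel_measurable (lborel \<Otimes>\<^sub>M lborel)"
    and hyp: "(\<integral>\<^sup>+ q. indicator (simplex2 T \<times> simplex2 T) q * gram_integrand f q
           \<partial>((lborel \<Otimes>\<^sub>M lborel) \<Otimes>\<^sub>M (lborel \<Otimes>\<^sub>M lborel))) < \<infinity>"
  shows "(\<integral>\<^sup>+ p. indicator (simplex2 T) p * ennreal (inverse (Np f p)) \<partial>(lborel \<Otimes>\<^sub>M lborel)) < \<infinity>"
proof -
  note Nm[measurable] = Np_meas[OF fm]
  define g where "g p = indicator (simplex2 T) p * ennreal (inverse (Np f p) ^ 3)" for p
  have gm[measurable]: "g \<in> borel_measurable (lborel \<Otimes>\<^sub>M lborel)" unfolding g_def by measurable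
  have "(\<integral>\<^sup>+ p. g p \<partial>(lborel \<Otimes>\<^sub>M lborel)) * (\<integral>\<^sup>+ p. g p \<partial>(lborel \<Otimes>\<^sub>M lborel))
      = (\<integral>\<^sup>+ z. g (fst z) * g (snd z) \<partial>((lborel \<Otimes>\<^sub>M lborel) \<Otimes>\<^sub>M (lborel \<Otimes>\<^sub>M lborel)))"
    by (rule nn_integral_pair_prod[symmetric]) (auto intro: MMsf)
  also have "\<dots> \<le> (\<integral>\<^sup>+ q. indicator (simplex2 T \<times> simplex2 T) q * gram_integrand f q
           \<partial>((lborel \<Otimes>\<^sub>M lborel) \<Otimes>\<^sub>M (lborel \<Otimes>\<^sub>M lborel)))"
  proof (intro nn_integral_mono)
    fix z :: "(real \<times> real) \<times> (real \<times> real)"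
    obtain p q where z: "z = (p, q)" by (cases z)
    have "g p * g q = indicator (simplex2 T \<times> simplex2 T) (p, q) *
        (ennreal (inverse (Np f p) ^ 3) * ennreal (inverse (Np f q) ^ 3))"
      by (simp add: g_def indicator_def mult_ac)
    also have "\<dots> \<le> indicator (simplex2 T \<times> simplex2 T) (p, q) * gram_integrand f (p, q)"
      by (intro mult_left_mono gram_lower) auto
    finally show "g (fst z) * g (snd z) \<le> indicator (simplex2 T \<times> simplex2 T) z * gram_integrand f z"
      by (simp add: z)
  qed
  also have "\<dots> < \<infinity>" by (rule hyp)
  finally have J3: "(\<integral>\<^sup>+ p. g p \<partial>(lborel \<Otimes>\<^sub>M lborel)) < \<infinity>"
    by (auto simp: ennreal_mult_less_top)
  have "(\<integral>\<^sup>+ p. indicator (simplex2 T) p * ennreal (inverse (Np f p)) \<partial>(lborel \<Otimes>\<^sub>M lborel))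
      \<le> (\<integral>\<^sup>+ p. indicator (simplex2 T) p + g p \<partial>(lborel \<Otimes>\<^sub>M lborel))"
  proof (intro nn_integral_mono)
    fix p
    have "ennreal (inverse (Np f p)) \<le> ennreal (1 + inverse (Np f p) ^ 3)"
      by (intro ennreal_leI inv_le_aux) (simp add: Np_def l2norm_nonneg)
    also have "\<dots> = 1 + ennreal (inverse (Np f p) ^ 3)"
      by (simp add: ennreal_plus Np_def l2norm_nonneg)
    finally show "indicator (simplex2 T) p * ennreal (inverse (Np f p)) \<le> indicator (simplex2 T) p + g p"
      by (auto simp: g_def indicator_def)
  qed
  also have "\<dots> = emeasure (lborel \<Otimes>\<^sub>M lborel) (simplex2 T) + (\<integral>\<^sup>+ p. g p \<partial>(lborel \<Otimes>\<^sub>M lborel))"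
    by (subst nn_integral_add) (auto simp: nn_integral_indicator[OF simplex2_sets])
  also have "\<dots> < \<infinity>" using J3 simplex2_finite by auto
  finally show ?thesis .
qed

definition coef :: "nat \<Rightarrow> real" where
  "coef n = (if even n then (-1) ^ (n div 2) / (sqrt (2 * pi) * 2 ^ (n div 2) * fact (n div 2)) else 0)"

definition ecoef :: "nat \<Rightarrow> real" where
  "ecoef m = (2 * real m + 1) * fact (2 * m) / (4 ^ m * (fact m)\<^sup>2)"

lemma gch_rec: "of_nat (Suc k) * ((a::real) gchoose Suc k) = (a - of_nat k) * (a gchoose k)"
  using gbinomial_absorption[of k a] gbinomial_absorb_comp[of a k] by simp

lemma ecoef_gchoose: "ecoef m = (-1) ^ m * ((-3/2::real) gchoose m)"
proof (induction m)
  case 0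
  then show ?case by (simp add: ecoef_def)
next
  case (Suc m)
  have f2: "fact (2 * Suc m) = (2 * real m + 2) * (2 * real m + 1) * (fact (2 * m) :: real)"
    by (simp add: algebra_simps)
  have f1: "fact (Suc m) = (real m + 1) * (fact m :: real)" by simp
  have alg: "(2 * (x + 1) + 1) * ((2 * x + 2) * (2 * x + 1) * F) / (4 * P * ((x + 1) * G)\<^sup>2)
      = (2 * x + 1) * F / (P * G\<^sup>2) * ((2 * x + 3) / (2 * x + 2))"
    if "x \<ge> 0" "P > 0" "G > 0" for x F P G :: real
  proof -
    have d1: "4 * P * ((x + 1) * G)\<^sup>2 \<noteq> 0" using that by auto
    have d2: "P * G\<^sup>2 * (2 * x + 2) \<noteq> 0" using that by auto
    have "(2 * x + 1) * F / (P * G\<^sup>2) * ((2 * x + 3) / (2 * x + 2))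
        = ((2 * x + 1) * F * (2 * x + 3)) / (P * G\<^sup>2 * (2 * x + 2))" by simp
    also have "(2 * (x + 1) + 1) * ((2 * x + 2) * (2 * x + 1) * F) / (4 * P * ((x + 1) * G)\<^sup>2) = \<dots>"
      using d1 d2 by (subst frac_eq_eq) (auto simp: algebra_simps power2_eq_square)
    finally show ?thesis .
  qed
  have "ecoef (Suc m) = ecoef m * ((2 * real m + 3) / (2 * real m + 2))"
    unfolding ecoef_def f2 f1 using alg[of "real m" "4 ^ m" "fact m" "fact (2 * m)"]
    by (simp add: power_Suc)
  also have "\<dots> = (-1) ^ m * ((-3/2::real) gchoose m) * ((2 * real m + 3) / (2 * real m + 2))"
    using Suc by simp
  also have "\<dots> = (-1) ^ Suc m * ((-3/2::real) gchoose Suc m)"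
  proof -
    have "(real m + 1) * ((-3/2::real) gchoose Suc m) = (-3/2 - real m) * ((-3/2::real) gchoose m)"
      using gch_rec[of m "-3/2"] by (simp add: add.commute)
    then have "((-3/2::real) gchoose Suc m) = (-3/2 - real m) / (real m + 1) * ((-3/2::real) gchoose m)"
      by (simp add: field_simps)
    moreover have "(-3/2 - real m) / (real m + 1) = - ((2 * real m + 3) / (2 * real m + 2))"
    proof -
      have "real m + 1 \<noteq> 0" "2 * real m + 2 \<noteq> 0" by auto
      then show ?thesis by (simp add: field_simps)
    qed
    ultimately have "((-3/2::real) gchoose Suc m) = - ((2 * real m + 3) / (2 * real m + 2)) * ((-3/2::real) gchoose m)"
      by metis
    moreover have key: "\<And>s g q gs::real. gs = - q * g \<Longrightarrow> s * g * q = - s * gs" by simp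
    moreover have "(-1::real) ^ Suc m = - ((-1) ^ m)" by simp
    ultimately show ?thesis by metis
  qed
  finally show ?case .
qed

lemma ecoef_nonneg: "ecoef m \<ge> 0"
  by (simp add: ecoef_def)

lemma ecoef_sums:
  assumes "0 \<le> y" "y < 1"
  shows "(\<lambda>m. ecoef m * y ^ m) sums ((1 - y) powr (-3/2))"
proof -
  have "(\<lambda>m. ((-3/2::real) gchoose m) * (-y) ^ m) sums ((1 + (-y)) powr (-3/2))"
    using assms by (intro gen_binomial_real) auto
  moreover have "((-3/2::real) gchoose m) * (-y) ^ m = ecoef m * y ^ m" for m
    by (simp add: ecoef_gchoose power_minus[of y] mult_ac)
  ultimately show ?thesis by simp
qed

lemma ecoef_partial_le:
  assumes "0 \<le> y" "y < 1"
  shows "(\<Sum>m<K. ecoef m * y ^ m) \<le> (1 - y) powr (-3/2)"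
proof -
  have s: "(\<lambda>m. ecoef m * y ^ m) sums ((1 - y) powr (-3/2))" by (rule ecoef_sums[OF assms])
  have "(\<Sum>m<K. ecoef m * y ^ m) \<le> (\<Sum>m. ecoef m * y ^ m)"
    using s assms ecoef_nonneg by (intro sum_le_suminf) (auto simp: sums_iff)
  then show ?thesis using s by (simp add: sums_iff)
qed

lemma coef_weight:
  "(1 + real n) * fact n * (coef n)\<^sup>2 = (if even n then ecoef (n div 2) / (2 * pi) else 0)"
proof (cases "even n")
  case True
  then obtain m where n: "n = 2 * m" by blast
  have c2: "(coef n)\<^sup>2 = 1 / (2 * pi * 4 ^ m * (fact m)\<^sup>2)"
  proof -
    have "(coef n)\<^sup>2 = ((-1) ^ m)\<^sup>2 / ((sqrt (2 * pi))\<^sup>2 * (2 ^ m)\<^sup>2 * (fact m)\<^sup>2)"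
      by (simp add: n coef_def power_divide power_mult_distrib)
    also have "((-1::real) ^ m)\<^sup>2 = 1" by (simp add: power_even_eq[symmetric] power_mult[symmetric] mult.commute)
    also have "(sqrt (2 * pi))\<^sup>2 = 2 * pi" by simp
    also have "((2::real) ^ m)\<^sup>2 = 4 ^ m" by (simp add: power_mult_distrib[symmetric] power2_eq_square)
    finally show ?thesis by simp
  qed
  have "(1 + real n) * fact n * (coef n)\<^sup>2 = (1 + real n) * fact n / (2 * pi * 4 ^ m * (fact m)\<^sup>2)"
    by (simp add: c2)
  then show ?thesis using True by (simp add: n ecoef_def mult_ac)
qed (simp add: coef_def)

lemma sum_even_reindex:
  fixes g :: "nat \<Rightarrow> 'a::comm_monoid_add"
  shows "(\<Sum>n<K. if even n then g (n div 2) else 0) = (\<Sum>m<(K + 1) div 2. g m)"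
proof (induction K)
  case 0
  then show ?case by simp
next
  case (Suc K)
  show ?case
  proof (cases "even K")
    case True
    then obtain j where j: "K = 2 * j" by blast
    then show ?thesis using Suc True by simp
  next
    case False
    then obtain j where j: "K = 2 * j + 1" using oddE by blast
    have "(Suc K + 1) div 2 = (K + 1) div 2" unfolding j by simp
    then show ?thesis using Suc False by simp
  qed
qed

lemma sums_even_reindex:
  fixes g :: "nat \<Rightarrow> 'a::real_normed_vector"
  assumes "g sums s"
  shows "(\<lambda>n. if even n then g (n div 2) else 0) sums s"
proof -
  have lim: "filterlim (\<lambda>K::nat. (K + 1) div 2) sequentially sequentially"
    unfolding filterlim_at_top eventually_sequentially
  proof (intro allI)
    fix Z :: nat
    have "\<forall>n\<ge>2 * Z. Z \<le> (n + 1) div 2"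
    proof (intro allI impI)
      fix n :: nat assume "2 * Z \<le> n"
      then have "(2 * Z) div 2 \<le> (n + 1) div 2" by (intro div_le_mono) simp
      then show "Z \<le> (n + 1) div 2" by simp
    qed
    then show "\<exists>N. \<forall>n\<ge>N. Z \<le> (n + 1) div 2" by blast
  qed
  have "(\<lambda>K. \<Sum>m<(K + 1) div 2. g m) \<longlonglongrightarrow> s"
    using filterlim_compose[OF assms[unfolded sums_def] lim] by (simp add: comp_def)
  then show ?thesis unfolding sums_def sum_even_reindex .
qed

lemma Rn_sf: "sigma_finite_measure (Rn n)"
proof -
  interpret product_sigma_finite "\<lambda>_::nat. lborel :: real measure" by standard
  interpret finite_product_sigma_finite "\<lambda>_::nat. lborel :: real measure" "{..<n}" by standard simp
  show ?thesis by (rule sigma_finite_measure_axioms)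
qed

lemma MM2_sf: "sigma_finite_measure ((lborel \<Otimes>\<^sub>M lborel) \<Otimes>\<^sub>M (lborel \<Otimes>\<^sub>M lborel) :: ((real \<times> real) \<times> (real \<times> real)) measure)"
  by (simp add: lborel_prod lborel.sigma_finite_measure_axioms)

lemma pair_sf: "sigma_finite_measure A \<Longrightarrow> sigma_finite_measure B \<Longrightarrow> pair_sigma_finite A B"
  by (simp add: pair_sigma_finite_def)

lemma prod_integral_pow:
  fixes g :: "real \<Rightarrow> 'b::{real_normed_field,banach,second_countable_topology}"
  assumes "integrable lborel g"
  shows "(\<integral>x. (\<Prod>i<n. g (x i)) \<partial>Rn n) = (integral\<^sup>L lborel g) ^ n"
proof -
  interpret product_sigma_finite "\<lambda>_::nat. lborel :: real measure" by standard
  show ?thesis using product_integral_prod[of "{..<n}" "\<lambda>_. g"] assms by simp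
qed

lemma prod_nn_integral_pow:
  fixes g :: "real \<Rightarrow> ennreal"
  assumes "g \<in> borel_measurable lborel"
  shows "(\<integral>\<^sup>+x. (\<Prod>i<n. g (x i)) \<partial>Rn n) = (integral\<^sup>N lborel g) ^ n"
proof -
  interpret product_sigma_finite "\<lambda>_::nat. lborel :: real measure" by standard
  show ?thesis using product_nn_integral_prod[of "{..<n}" "\<lambda>_. g"] assms by simp
qed

locale silctx =
  fixes T :: real and f :: "real \<Rightarrow> real \<Rightarrow> real"
  assumes fm: "(\<lambda>(t, x). f t x) \<in> borel_measurable (lborel \<Otimes>\<^sub>M lborel)"
    and fL2: "\<forall>t\<in>{0..T}. L2 (f t)"
    and I1fin: "(\<integral>\<^sup>+ p. indicator (simplex2 T) p * ennreal (inverse (Np f p)) \<partial>(lborel \<Otimes>\<^sub>M lborel)) < \<infinity>"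
begin

lemma Ap_meas'[measurable (raw)]:
  "h \<in> N \<rightarrow>\<^sub>M (lborel \<Otimes>\<^sub>M lborel) \<Longrightarrow> k \<in> N \<rightarrow>\<^sub>M borel \<Longrightarrow> (\<lambda>z. Ap f (h z) (k z)) \<in> borel_measurable N"
  by (rule Ap_meas[OF fm])

lemma Np_meas'[measurable]: "Np f \<in> borel_measurable (lborel \<Otimes>\<^sub>M lborel)"
  by (rule Np_meas[OF fm])

lemma L2_Ap_S: "p \<in> simplex2 T \<Longrightarrow> L2 (Ap f p)"
  using L2_Ap[OF fL2] simplex2_sub by blast

lemma Np_nonneg: "Np f p \<ge> 0"
  by (simp add: Np_def l2norm_nonneg)

lemma Ap_lb_meas[measurable]: "Ap f p \<in> borel_measurable lborel"
  using Ap_meas'[of "\<lambda>_. p" lborel "\<lambda>y. y"] by (auto simp: space_pair_measure)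

lemma comp_meas[measurable]: "i \<in> {..<n} \<Longrightarrow> (\<lambda>x. x i) \<in> borel_measurable (Rn n)"
  using measurable_component_singleton[of i "{..<n}" "\<lambda>_. lborel"] by (simp add: measurable_lborel2)

lemma Ap_comp_meas[measurable]: "i \<in> {..<n} \<Longrightarrow> (\<lambda>x. Ap f p (x i)) \<in> borel_measurable (Rn n)"
  by (rule Ap_meas'[of "\<lambda>_. p"]) (auto simp: space_pair_measure)

definition K :: "nat \<Rightarrow> real \<times> real \<Rightarrow> (nat \<Rightarrow> real) \<Rightarrow> real" where
  "K n p x = indicator (simplex2 T) p * inverse (Np f p) ^ Suc n * (\<Prod>i<n. Ap f p (x i))"

definition Phi :: "nat \<Rightarrow> (nat \<Rightarrow> real) \<Rightarrow> real" where
  "Phi n x = coef n * (\<integral>p. K n p x \<partial>(lborel \<Otimes>\<^sub>M lborel))"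

lemma K_meas[measurable]: "(\<lambda>z. K n (snd z) (fst z)) \<in> borel_measurable (Rn n \<Otimes>\<^sub>M (lborel \<Otimes>\<^sub>M lborel))"
  unfolding K_def by measurable

lemma Phi_meas[measurable]: "Phi n \<in> borel_measurable (Rn n)"
proof -
  have "(\<lambda>x. \<integral>p. K n p x \<partial>(lborel \<Otimes>\<^sub>M lborel)) \<in> borel_measurable (Rn n)"
    using K_meas[of n] by (intro sigma_finite_measure.borel_measurable_lebesgue_integral[OF MMsf]) (simp add: case_prod_beta')
  then show ?thesis unfolding Phi_def by measurable
qed


lemma inner_abs:
  assumes "p \<in> simplex2 T" "q \<in> simplex2 T"
  shows "integrable lborel (\<lambda>y. Ap f p y * Ap f q y)"
    and "(\<integral>\<^sup>+y. ennreal \<bar>Ap f p y * Ap f q y\<bar> \<partial>lborel) = ennreal (\<integral>y. \<bar>Ap f p y * Ap f q y\<bar> \<partial>lborel)"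
    and "(\<integral>y. \<bar>Ap f p y * Ap f q y\<bar> \<partial>lborel) \<le> Np f p * Np f q"
proof -
  show i: "integrable lborel (\<lambda>y. Ap f p y * Ap f q y)"
    using L2_integrable_mult[OF L2_Ap_S[OF assms(1)] L2_Ap_S[OF assms(2)]] .
  show "(\<integral>\<^sup>+y. ennreal \<bar>Ap f p y * Ap f q y\<bar> \<partial>lborel) = ennreal (\<integral>y. \<bar>Ap f p y * Ap f q y\<bar> \<partial>lborel)"
    using i by (intro nn_integral_eq_integral) auto
  show "(\<integral>y. \<bar>Ap f p y * Ap f q y\<bar> \<partial>lborel) \<le> Np f p * Np f q"
    unfolding Np_def by (rule L2_CS[OF L2_Ap_S[OF assms(1)] L2_Ap_S[OF assms(2)]])
qed

lemma inv_pow_cancel: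
  fixes a b :: real assumes "a \<ge> 0" "b \<ge> 0"
  shows "inverse a ^ Suc n * inverse b ^ Suc n * (a * b) ^ n = inverse a * inverse b"
proof (cases "a = 0 \<or> b = 0")
  case False
  then show ?thesis by (simp add: power_mult_distrib power_inverse field_simps)
qed auto

lemma KK_nn:
  "(\<integral>\<^sup>+x. ennreal (norm (K n p x * K n q x)) \<partial>Rn n)
     \<le> ennreal (indicator (simplex2 T) p * indicator (simplex2 T) q * inverse (Np f p) * inverse (Np f q))"
proof (cases "p \<in> simplex2 T \<and> q \<in> simplex2 T")
  case False
  then show ?thesis by (auto simp: K_def)
next
  case True
  then have pS: "p \<in> simplex2 T" and qS: "q \<in> simplex2 T" by auto
  define c where "c = inverse (Np f p) ^ Suc n * inverse (Np f q) ^ Suc n"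
  define I where "I = (\<integral>y. \<bar>Ap f p y * Ap f q y\<bar> \<partial>lborel)"
  have c0: "c \<ge> 0" by (simp add: c_def Np_nonneg)
  have I0: "I \<ge> 0" by (simp add: I_def)
  have "norm (K n p x * K n q x) = c * (\<Prod>i<n. \<bar>Ap f p (x i) * Ap f q (x i)\<bar>)" for x
    using True by (simp add: K_def c_def abs_mult prod.distrib[symmetric] abs_prod Np_nonneg mult_ac)
  then have "(\<integral>\<^sup>+x. ennreal (norm (K n p x * K n q x)) \<partial>Rn n)
      = (\<integral>\<^sup>+x. ennreal c * (\<Prod>i<n. ennreal \<bar>Ap f p (x i) * Ap f q (x i)\<bar>) \<partial>Rn n)"
    using c0 by (simp add: ennreal_mult prod_ennreal prod_nonneg)
  also have "\<dots> = ennreal c * (\<integral>\<^sup>+x. (\<Prod>i<n. ennreal \<bar>Ap f p (x i) * Ap f q (x i)\<bar>) \<partial>Rn n)"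
    by (rule nn_integral_cmult) measurable
  also have "(\<integral>\<^sup>+x. (\<Prod>i<n. ennreal \<bar>Ap f p (x i) * Ap f q (x i)\<bar>) \<partial>Rn n)
      = (\<integral>\<^sup>+y. ennreal \<bar>Ap f p y * Ap f q y\<bar> \<partial>lborel) ^ n"
    by (rule prod_nn_integral_pow[of "\<lambda>y. ennreal \<bar>Ap f p y * Ap f q y\<bar>"]) measurable
  also have "\<dots> = ennreal (I ^ n)"
    using inner_abs(2)[OF pS qS] I0 by (simp add: I_def ennreal_power)
  also have "ennreal c * ennreal (I ^ n) = ennreal (c * I ^ n)"
    using c0 I0 by (simp add: ennreal_mult)
  also have "c * I ^ n \<le> c * (Np f p * Np f q) ^ n"
    using inner_abs(3)[OF pS qS] I0 c0 by (intro mult_left_mono power_mono) (auto simp: I_def)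
  also have "\<dots> = inverse (Np f p) * inverse (Np f q)"
    unfolding c_def by (rule inv_pow_cancel) (auto simp: Np_nonneg)
  finally show ?thesis using True by (simp add: ennreal_leI)
qed

lemma H_integrable:
  "integrable (Rn n \<Otimes>\<^sub>M ((lborel \<Otimes>\<^sub>M lborel) \<Otimes>\<^sub>M (lborel \<Otimes>\<^sub>M lborel)))
     (\<lambda>z. K n (fst (snd z)) (fst z) * K n (snd (snd z)) (fst z))"
proof (rule integrableI_bounded)
  interpret P: pair_sigma_finite "Rn n" "(lborel \<Otimes>\<^sub>M lborel) \<Otimes>\<^sub>M (lborel \<Otimes>\<^sub>M lborel) :: ((real \<times> real) \<times> (real \<times> real)) measure"
    by (intro pair_sf Rn_sf MM2_sf)
  have Km: "(\<lambda>z. K n (fst (snd z)) (fst z) * K n (snd (snd z)) (fst z))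
      \<in> borel_measurable (Rn n \<Otimes>\<^sub>M ((lborel \<Otimes>\<^sub>M lborel) \<Otimes>\<^sub>M (lborel \<Otimes>\<^sub>M lborel)))"
    unfolding K_def by measurable
  then show "(\<lambda>z. K n (fst (snd z)) (fst z) * K n (snd (snd z)) (fst z))
      \<in> borel_measurable (Rn n \<Otimes>\<^sub>M ((lborel \<Otimes>\<^sub>M lborel) \<Otimes>\<^sub>M (lborel \<Otimes>\<^sub>M lborel)))" .
  define g where "g p = ennreal (indicator (simplex2 T) p * inverse (Np f p))" for p
  have gm[measurable]: "g \<in> borel_measurable (lborel \<Otimes>\<^sub>M lborel)" unfolding g_def by measurable
  have "(\<integral>\<^sup>+ z. ennreal (norm (K n (fst (snd z)) (fst z) * K n (snd (snd z)) (fst z)))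
        \<partial>(Rn n \<Otimes>\<^sub>M ((lborel \<Otimes>\<^sub>M lborel) \<Otimes>\<^sub>M (lborel \<Otimes>\<^sub>M lborel))))
      = (\<integral>\<^sup>+ w. (\<integral>\<^sup>+ x. ennreal (norm (K n (fst w) x * K n (snd w) x)) \<partial>Rn n)
           \<partial>((lborel \<Otimes>\<^sub>M lborel) \<Otimes>\<^sub>M (lborel \<Otimes>\<^sub>M lborel)))"
    by (subst P.nn_integral_snd[symmetric]) (use Km in auto)
  also have "\<dots> \<le> (\<integral>\<^sup>+ w. g (fst w) * g (snd w) \<partial>((lborel \<Otimes>\<^sub>M lborel) \<Otimes>\<^sub>M (lborel \<Otimes>\<^sub>M lborel)))"
  proof (intro nn_integral_mono)
    fix w :: "(real \<times> real) \<times> (real \<times> real)"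
    have "g (fst w) * g (snd w) = ennreal (indicator (simplex2 T) (fst w) * indicator (simplex2 T) (snd w)
        * inverse (Np f (fst w)) * inverse (Np f (snd w)))"
      by (simp add: g_def ennreal_mult[symmetric] Np_nonneg mult_ac)
    then show "(\<integral>\<^sup>+ x. ennreal (norm (K n (fst w) x * K n (snd w) x)) \<partial>Rn n) \<le> g (fst w) * g (snd w)"
      using KK_nn[of n "fst w" "snd w"] by simp
  qed
  also have "\<dots> = (\<integral>\<^sup>+ p. g p \<partial>(lborel \<Otimes>\<^sub>M lborel)) * (\<integral>\<^sup>+ p. g p \<partial>(lborel \<Otimes>\<^sub>M lborel))"
    by (rule nn_integral_pair_prod) (auto intro: MMsf)
  also have "(\<integral>\<^sup>+ p. g p \<partial>(lborel \<Otimes>\<^sub>M lborel)) = (\<integral>\<^sup>+ p. indicator (simplex2 T) p * ennreal (inverse (Np f p)) \<partial>(lborel \<Otimes>\<^sub>M lborel))"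
    by (intro nn_integral_cong) (simp add: g_def indicator_def)
  also have "\<dots> * \<dots> < \<infinity>"
    using I1fin by (simp add: ennreal_mult_less_top)
  finally show "(\<integral>\<^sup>+ z. ennreal (norm (K n (fst (snd z)) (fst z) * K n (snd (snd z)) (fst z)))
        \<partial>(Rn n \<Otimes>\<^sub>M ((lborel \<Otimes>\<^sub>M lborel) \<Otimes>\<^sub>M (lborel \<Otimes>\<^sub>M lborel)))) < \<infinity>" .
qed

end

context silctx begin

abbreviation "MM \<equiv> (lborel \<Otimes>\<^sub>M lborel :: (real \<times> real) measure)"
abbreviation "MM2 \<equiv> (MM \<Otimes>\<^sub>M MM)"

lemma K_meas_p[measurable]: "(\<lambda>p. K n p x) \<in> borel_measurable MM"
proof -
  have [measurable]: "i \<in> {..<n} \<Longrightarrow> (\<lambda>p. Ap f p (x i)) \<in> borel_measurable MM" for i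
    by (rule Ap_meas'[of "\<lambda>p. p" _ "\<lambda>_. x i"]) auto
  show ?thesis unfolding K_def by measurable
qed

lemma K_integrable_from_sq:
  assumes "integrable MM2 (\<lambda>w. K n (fst w) x * K n (snd w) x)"
  shows "integrable MM (\<lambda>p. K n p x)"
proof (rule integrableI_bounded)
  show "(\<lambda>p. K n p x) \<in> borel_measurable MM" by measurable
  have "(\<integral>\<^sup>+ p. ennreal (norm (K n p x)) \<partial>MM) * (\<integral>\<^sup>+ p. ennreal (norm (K n p x)) \<partial>MM)
      = (\<integral>\<^sup>+ w. ennreal (norm (K n (fst w) x)) * ennreal (norm (K n (snd w) x)) \<partial>MM2)"
    by (rule nn_integral_pair_prod[symmetric]) (auto intro: MMsf)
  also have "\<dots> = (\<integral>\<^sup>+ w. ennreal (norm (K n (fst w) x * K n (snd w) x)) \<partial>MM2)"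
    by (intro nn_integral_cong) (simp add: ennreal_mult[symmetric] abs_mult)
  also have "\<dots> < \<infinity>" using assms by (simp add: integrable_iff_bounded)
  finally show "(\<integral>\<^sup>+ p. ennreal (norm (K n p x)) \<partial>MM) < \<infinity>"
    by (auto simp: ennreal_mult_less_top)
qed

lemma sq_integral_eq:
  assumes "integrable MM2 (\<lambda>w. K n (fst w) x * K n (snd w) x)"
  shows "(\<integral>p. K n p x \<partial>MM)\<^sup>2 = (\<integral>w. K n (fst w) x * K n (snd w) x \<partial>MM2)"
proof -
  interpret Q: pair_sigma_finite MM MM by (intro pair_sf MMsf)
  have i: "integrable MM2 (case_prod (\<lambda>p q. K n p x * K n q x))"
    using assms by (simp add: case_prod_beta')
  have "(\<integral>w. K n (fst w) x * K n (snd w) x \<partial>MM2) = (\<integral>p. \<integral>q. K n p x * K n q x \<partial>MM \<partial>MM)"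
    using Q.integral_fst[OF i] by (simp add: case_prod_beta')
  also have "\<dots> = (\<integral>p. K n p x * (\<integral>q. K n q x \<partial>MM) \<partial>MM)"
    by simp
  also have "\<dots> = (\<integral>p. K n p x \<partial>MM) * (\<integral>q. K n q x \<partial>MM)"
    by simp
  finally show ?thesis by (simp add: power2_eq_square)
qed

definition Wn :: "nat \<Rightarrow> (real \<times> real) \<times> (real \<times> real) \<Rightarrow> real" where
  "Wn n w = (\<integral>x. K n (fst w) x * K n (snd w) x \<partial>Rn n)"

lemma Phi_sq:
  shows "integrable (Rn n) (\<lambda>x. (Phi n x)\<^sup>2)"
    and "knorm2 n (Phi n) = (coef n)\<^sup>2 * (\<integral>w. Wn n w \<partial>MM2)"
    and "integrable MM2 (Wn n)"
proof -
  interpret P: pair_sigma_finite "Rn n" MM2 by (intro pair_sf Rn_sf MM2_sf)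
  have Hc: "integrable (Rn n \<Otimes>\<^sub>M MM2) (case_prod (\<lambda>x w. K n (fst w) x * K n (snd w) x))"
    using H_integrable[of n] by (simp add: case_prod_beta')
  have ae: "AE x in Rn n. (Phi n x)\<^sup>2 = (coef n)\<^sup>2 * (\<integral>w. K n (fst w) x * K n (snd w) x \<partial>MM2)"
    using P.AE_integrable_fst[OF Hc]
  proof eventually_elim
    case (elim x)
    then show ?case by (simp add: Phi_def power_mult_distrib sq_integral_eq)
  qed
  have i1: "integrable (Rn n) (\<lambda>x. (coef n)\<^sup>2 * (\<integral>w. K n (fst w) x * K n (snd w) x \<partial>MM2))"
    using P.integrable_fst[OF Hc] by simp
  have m1: "(\<lambda>x. (Phi n x)\<^sup>2) \<in> borel_measurable (Rn n)" by measurable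
  show "integrable (Rn n) (\<lambda>x. (Phi n x)\<^sup>2)"
    by (rule integrable_cong_AE_imp[OF i1 m1 AE_symmetric[OF ae]])
  have "knorm2 n (Phi n) = (\<integral>x. (coef n)\<^sup>2 * (\<integral>w. K n (fst w) x * K n (snd w) x \<partial>MM2) \<partial>Rn n)"
    unfolding knorm2_def by (rule integral_cong_AE[OF m1 borel_measurable_integrable[OF i1] ae])
  also have "\<dots> = (coef n)\<^sup>2 * (\<integral>x. (\<integral>w. K n (fst w) x * K n (snd w) x \<partial>MM2) \<partial>Rn n)"
    by simp
  also have "(\<integral>x. (\<integral>w. K n (fst w) x * K n (snd w) x \<partial>MM2) \<partial>Rn n) = (\<integral>w. Wn n w \<partial>MM2)"
    unfolding Wn_def using P.integral_fst[OF Hc] P.integral_snd[OF Hc] by simp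
  finally show "knorm2 n (Phi n) = (coef n)\<^sup>2 * (\<integral>w. Wn n w \<partial>MM2)" .
  show "integrable MM2 (Wn n)"
    unfolding Wn_def using P.integrable_snd[OF Hc] by simp
qed

end

lemma series_bound:
  fixes a b L :: real
  assumes a: "a > 0" and b: "b > 0" and G: "a\<^sup>2 * b\<^sup>2 - L\<^sup>2 > 0"
  shows "(\<Sum>m<J. ecoef m / (2 * pi) * inverse a ^ (2 * m + 1) * inverse b ^ (2 * m + 1) * L ^ (2 * m))
      \<le> (a * b)\<^sup>2 * (a\<^sup>2 * b\<^sup>2 - L\<^sup>2) powr (-3/2) / (2 * pi)"
proof -
  define P where "P = a * b"
  define y where "y = L\<^sup>2 / P\<^sup>2"
  define Gv where "Gv = a\<^sup>2 * b\<^sup>2 - L\<^sup>2"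
  have P: "P > 0" using a b by (simp add: P_def)
  have GP: "Gv = P\<^sup>2 - L\<^sup>2" by (simp add: Gv_def P_def power_mult_distrib)
  have Gv: "Gv > 0" using G by (simp add: Gv_def)
  have y0: "y \<ge> 0" by (simp add: y_def)
  have y1: "y < 1" using Gv P by (simp add: y_def GP)
  have trm: "ecoef m / (2 * pi) * inverse a ^ (2 * m + 1) * inverse b ^ (2 * m + 1) * L ^ (2 * m)
      = inverse (2 * pi * P) * (ecoef m * y ^ m)" for m
  proof -
    have "inverse a ^ (2 * m + 1) * inverse b ^ (2 * m + 1) = inverse P * inverse (P\<^sup>2) ^ m"
      by (simp add: P_def power_mult_distrib power_inverse power_mult power_add mult_ac flip: power_mult)
    moreover have "L ^ (2 * m) = (L\<^sup>2) ^ m" by (simp add: power_mult)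
    moreover have "y ^ m = (L\<^sup>2) ^ m * inverse (P\<^sup>2) ^ m"
      by (simp add: y_def power_mult_distrib divide_inverse power_inverse)
    ultimately show ?thesis by (simp add: field_simps)
  qed
  have "(\<Sum>m<J. ecoef m / (2 * pi) * inverse a ^ (2 * m + 1) * inverse b ^ (2 * m + 1) * L ^ (2 * m))
      = inverse (2 * pi * P) * (\<Sum>m<J. ecoef m * y ^ m)"
    unfolding sum_distrib_left by (rule sum.cong[OF refl trm])
  also have "\<dots> \<le> inverse (2 * pi * P) * (1 - y) powr (-3/2)"
    using P by (intro mult_left_mono ecoef_partial_le y0 y1) auto
  also have "1 - y = Gv / P\<^sup>2" using P by (simp add: y_def GP field_simps)
  also have "(Gv / P\<^sup>2) powr (-3/2) = Gv powr (-3/2) / (P\<^sup>2) powr (-3/2)"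
    using Gv P by (simp add: powr_divide)
  also have "(P\<^sup>2) powr (-3/2) = inverse (P ^ 3)" by (rule powr_neg32[OF P])
  also have "inverse (2 * pi * P) * (Gv powr (-3/2) / inverse (P ^ 3)) = P\<^sup>2 * Gv powr (-3/2) / (2 * pi)"
    using P by (simp add: field_simps power2_eq_square power3_eq_cube)
  finally show ?thesis by (simp add: P_def Gv_def)
qed

context silctx begin

lemma Wn_eq:
  "Wn n w = indicator (simplex2 T) (fst w) * indicator (simplex2 T) (snd w)
     * inverse (Np f (fst w)) ^ Suc n * inverse (Np f (snd w)) ^ Suc n
     * (l2inner (Ap f (fst w)) (Ap f (snd w))) ^ n"
proof (cases "fst w \<in> simplex2 T \<and> snd w \<in> simplex2 T")
  case False
  then show ?thesis by (auto simp: Wn_def K_def)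
next
  case True
  define c where "c = inverse (Np f (fst w)) ^ Suc n * inverse (Np f (snd w)) ^ Suc n"
  have "K n (fst w) x * K n (snd w) x = c * (\<Prod>i<n. Ap f (fst w) (x i) * Ap f (snd w) (x i))" for x
    using True by (simp add: K_def c_def prod.distrib mult_ac)
  then have "Wn n w = c * (\<integral>x. (\<Prod>i<n. Ap f (fst w) (x i) * Ap f (snd w) (x i)) \<partial>Rn n)"
    by (simp add: Wn_def)
  also have "(\<integral>x. (\<Prod>i<n. Ap f (fst w) (x i) * Ap f (snd w) (x i)) \<partial>Rn n)
      = (\<integral>y. Ap f (fst w) y * Ap f (snd w) y \<partial>lborel) ^ n"
    using inner_abs(1) True by (intro prod_integral_pow) auto
  finally show ?thesis using True by (simp add: c_def l2inner_def)
qed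

lemma l2inner_meas[measurable]:
  "(\<lambda>w. l2inner (Ap f (fst w)) (Ap f (snd w))) \<in> borel_measurable MM2"
proof -
  have "(\<lambda>z. Ap f (fst (fst z)) (snd z) * Ap f (snd (fst z)) (snd z)) \<in> borel_measurable (MM2 \<Otimes>\<^sub>M lborel)"
    by measurable
  then have "(\<lambda>w. \<integral>y. Ap f (fst w) y * Ap f (snd w) y \<partial>lborel) \<in> borel_measurable MM2"
    by (intro lborel.borel_measurable_lebesgue_integral) (simp add: case_prod_beta')
  then show ?thesis by (simp add: l2inner_def)
qed

lemma gram_meas[measurable]: "gram_integrand f \<in> borel_measurable MM2"
proof -
  have "gram_integrand f = (\<lambda>w. let G = (Np f (fst w))\<^sup>2 * (Np f (snd w))\<^sup>2 - (l2inner (Ap f (fst w)) (Ap f (snd w)))\<^sup>2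
     in if G > 0 then ennreal (G powr (-3/2)) else \<infinity>)"
    by (rule ext) (metis gram_integrand_eq prod.collapse)
  also have "\<dots> \<in> borel_measurable MM2" unfolding Let_def by measurable
  finally show ?thesis .
qed

lemma Wn_meas[measurable]: "Wn n \<in> borel_measurable MM2"
  using Phi_sq(3) by (rule borel_measurable_integrable)

end

locale silctx2 = silctx +
  fixes M :: real
  assumes normAE: "AE p in lborel \<Otimes>\<^sub>M lborel. p \<in> {0..T} \<times> {0..T} \<longrightarrow> Np f p \<le> M"
    and hyp: "(\<integral>\<^sup>+ q. indicator (simplex2 T \<times> simplex2 T) q * gram_integrand f q
           \<partial>((lborel \<Otimes>\<^sub>M lborel) \<Otimes>\<^sub>M (lborel \<Otimes>\<^sub>M lborel))) < \<infinity>"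
begin

definition V :: "nat \<Rightarrow> (real \<times> real) \<times> (real \<times> real) \<Rightarrow> real" where
  "V J w = (\<Sum>n<J. (1 + real n) * fact n * (coef n)\<^sup>2 * Wn n w)"

lemma V_alt: "V J w = (\<Sum>n<J. if even n then ecoef (n div 2) / (2 * pi) * Wn n w else 0)"
  unfolding V_def by (intro sum.cong refl) (simp add: coef_weight)

lemma Wn_even_nonneg: "even n \<Longrightarrow> Wn n w \<ge> 0"
  by (simp add: Wn_eq Np_nonneg zero_le_even_power)

lemma V_nonneg: "V J w \<ge> 0"
  unfolding V_alt
proof (intro sum_nonneg)
  fix n
  show "0 \<le> (if even n then ecoef (n div 2) / (2 * pi) * Wn n w else 0)"
    using ecoef_nonneg[of "n div 2"] Wn_even_nonneg[of n w] by auto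
qed

lemma V_pt_bound:
  assumes p: "fst w \<in> simplex2 T \<longrightarrow> Np f (fst w) \<le> M" and q: "snd w \<in> simplex2 T \<longrightarrow> Np f (snd w) \<le> M"
  shows "ennreal (V J w) \<le> ennreal ((M\<^sup>2 + 1)\<^sup>2 / (2 * pi)) * (indicator (simplex2 T \<times> simplex2 T) w * gram_integrand f w)"
proof (cases "fst w \<in> simplex2 T \<and> snd w \<in> simplex2 T")
  case False
  then have "V J w = 0" by (auto simp: V_def Wn_eq)
  then show ?thesis by simp
next
  case True
  obtain pp qq where w: "w = (pp, qq)" by (cases w)
  have inS: "pp \<in> simplex2 T" "qq \<in> simplex2 T" using True w by auto
  define a where "a = Np f pp"
  define b where "b = Np f qq"
  define L where "L = l2inner (Ap f pp) (Ap f qq)"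
  define G where "G = a\<^sup>2 * b\<^sup>2 - L\<^sup>2"
  have a0: "a \<ge> 0" "b \<ge> 0" by (auto simp: a_def b_def Np_nonneg)
  have aM: "a \<le> M" "b \<le> M" using p q True by (auto simp: a_def b_def w)
  have M1: "M\<^sup>2 + 1 > 0" by (simp add: add_nonneg_pos)
  then have cpos: "(M\<^sup>2 + 1)\<^sup>2 / (2 * pi) > 0" by simp
  have ind: "indicator (simplex2 T \<times> simplex2 T) w = (1::ennreal)" using True w by (simp add: indicator_def)
  show ?thesis
  proof (cases "G > 0")
    case False
    then have "gram_integrand f w = \<infinity>"
      by (simp add: w gram_integrand_eq a_def b_def L_def G_def Let_def)
    moreover have "ennreal ((M\<^sup>2 + 1)\<^sup>2 / (2 * pi)) * \<infinity> = \<infinity>"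
      using cpos M1 by (simp add: ennreal_mult_top)
    ultimately show ?thesis using ind by simp
  next
    case True
    have "G \<le> (a * b)\<^sup>2" by (simp add: G_def power_mult_distrib)
    with True have "(a * b)\<^sup>2 > 0" by linarith
    then have apos: "a > 0" "b > 0" using a0 by (auto simp: less_le)
    define h where "h m = ecoef m / (2 * pi) * inverse a ^ (2 * m + 1) * inverse b ^ (2 * m + 1) * L ^ (2 * m)" for m
    have "V J w = (\<Sum>n<J. if even n then h (n div 2) else 0)"
      unfolding V_alt
      by (intro sum.cong refl) (auto simp: h_def Wn_eq w a_def b_def L_def inS elim!: evenE)
    also have "\<dots> = (\<Sum>m<(J + 1) div 2. h m)" by (rule sum_even_reindex)
    also have "\<dots> \<le> (a * b)\<^sup>2 * G powr (-3/2) / (2 * pi)"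
      unfolding h_def G_def by (rule series_bound[OF apos]) (use True in \<open>simp add: G_def\<close>)
    also have "\<dots> \<le> (M\<^sup>2 + 1)\<^sup>2 / (2 * pi) * G powr (-3/2)"
    proof -
      have "a * b \<le> M * M" using aM a0 by (intro mult_mono) auto
      also have "M * M \<le> M\<^sup>2 + 1" by (simp add: power2_eq_square)
      finally have "(a * b)\<^sup>2 \<le> (M\<^sup>2 + 1)\<^sup>2" using a0 by (intro power_mono) auto
      then show ?thesis by (simp add: divide_right_mono mult_right_mono)
    qed
    finally have "ennreal (V J w) \<le> ennreal ((M\<^sup>2 + 1)\<^sup>2 / (2 * pi)) * ennreal (G powr (-3/2))"
      using cpos by (simp add: ennreal_mult[symmetric] ennreal_leI)
    moreover have "gram_integrand f w = ennreal (G powr (-3/2))"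
      using True by (simp add: w gram_integrand_eq a_def b_def L_def G_def Let_def)
    ultimately show ?thesis using ind by simp
  qed
qed

end

context silctx2 begin

lemma AE_bounds:
  "AE w in MM2. (fst w \<in> simplex2 T \<longrightarrow> Np f (fst w) \<le> M) \<and> (snd w \<in> simplex2 T \<longrightarrow> Np f (snd w) \<le> M)"
proof -
  from normAE obtain N where N: "{p \<in> space MM. \<not> (p \<in> {0..T} \<times> {0..T} \<longrightarrow> Np f p \<le> M)} \<subseteq> N"
    "emeasure MM N = 0" "N \<in> sets MM"
    by (rule AE_E)
  have Nn: "N \<in> null_sets MM" using N by auto
  have Z: "N \<times> space MM \<union> space MM \<times> N \<in> null_sets MM2"
    using sigma_finite_measure.times_in_null_sets1[OF MMsf Nn sets.top]
      sigma_finite_measure.times_in_null_sets2[OF MMsf sets.top Nn]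
    by auto
  show ?thesis
  proof (rule AE_I'[OF Z])
    show "{w \<in> space MM2. \<not> ((fst w \<in> simplex2 T \<longrightarrow> Np f (fst w) \<le> M) \<and> (snd w \<in> simplex2 T \<longrightarrow> Np f (snd w) \<le> M))}
        \<subseteq> N \<times> space MM \<union> space MM \<times> N"
      using N(1) simplex2_sub[of T] by (force simp: space_pair_measure)
  qed
qed

lemma V_meas[measurable]: "V J \<in> borel_measurable MM2"
  unfolding V_def by measurable

lemma summable_main: "summable (\<lambda>n. (1 + real n powr 1) * fact n * knorm2 n (Phi n))"
proof (rule summableI_nonneg_bounded)
  fix n
  have "knorm2 n (Phi n) \<ge> 0" by (simp add: knorm2_def)
  then show "0 \<le> (1 + real n powr 1) * fact n * knorm2 n (Phi n)" by simp
next
  fix J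
  define c where "c = ennreal ((M\<^sup>2 + 1)\<^sup>2 / (2 * pi))"
  define B where "B = (\<integral>\<^sup>+ q. indicator (simplex2 T \<times> simplex2 T) q * gram_integrand f q \<partial>MM2)"
  have term_eq: "(1 + real n) * fact n * knorm2 n (Phi n) = (\<integral>w. (1 + real n) * fact n * (coef n)\<^sup>2 * Wn n w \<partial>MM2)" for n
    by (simp add: Phi_sq(2) mult_ac)
  have "(\<Sum>n<J. (1 + real n powr 1) * fact n * knorm2 n (Phi n)) = (\<Sum>n<J. \<integral>w. (1 + real n) * fact n * (coef n)\<^sup>2 * Wn n w \<partial>MM2)"
    by (simp add: term_eq)
  also have "\<dots> = (\<integral>w. V J w \<partial>MM2)"
    unfolding V_def by (rule Bochner_Integration.integral_sum[symmetric]) (use Phi_sq(3) in auto)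
  also have "\<dots> = enn2real (\<integral>\<^sup>+ w. ennreal (V J w) \<partial>MM2)"
    by (rule integral_eq_nn_integral) (auto simp: V_nonneg)
  also have "\<dots> \<le> enn2real (c * B)"
  proof (rule enn2real_mono)
    have "(\<integral>\<^sup>+ w. ennreal (V J w) \<partial>MM2) \<le> (\<integral>\<^sup>+ w. c * (indicator (simplex2 T \<times> simplex2 T) w * gram_integrand f w) \<partial>MM2)"
      using AE_bounds by (intro nn_integral_mono_AE) (auto simp: c_def intro: V_pt_bound)
    also have "\<dots> = c * B" unfolding B_def by (rule nn_integral_cmult) measurable
    finally show "(\<integral>\<^sup>+ w. ennreal (V J w) \<partial>MM2) \<le> c * B" .
    show "c * B < \<top>" using hyp by (simp add: B_def c_def ennreal_mult_less_top)
  qed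
  finally show "(\<Sum>n<J. (1 + real n powr 1) * fact n * knorm2 n (Phi n)) \<le> enn2real (c * B)" .
qed

end

lemma schwartz_meas:
  assumes "schwartzC \<xi>"
  shows "\<xi> \<in> borel_measurable borel"
proof -
  from assms obtain D :: "nat \<Rightarrow> real \<Rightarrow> complex" where D: "D 0 = \<xi>" "\<forall>m x. (D m has_vector_derivative D (Suc m) x) (at x)"
    unfolding schwartzC_def by blast
  have "isCont \<xi> x" for x
    using has_vector_derivative_continuous[OF D(2)[rule_format, of 0 x]] D(1) by simp
  then have "continuous_on UNIV \<xi>" by (intro continuous_at_imp_continuous_on) auto
  then show ?thesis by (rule borel_measurable_continuous_onI)
qed

lemma schwartz_L2:
  assumes "schwartzC \<xi>"
  shows "L2 (\<lambda>x. norm (\<xi> x))"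
proof -
  from assms obtain D :: "nat \<Rightarrow> real \<Rightarrow> complex" where D: "D 0 = \<xi>" "\<forall>k m. \<exists>C. \<forall>x. \<bar>x\<bar> ^ k * norm (D m x) \<le> C"
    unfolding schwartzC_def by blast
  obtain C0 where C0: "\<And>x. norm (\<xi> x) \<le> C0" using D(2)[rule_format, of 0 0] D(1) by auto
  obtain C2 where C2: "\<And>x. \<bar>x\<bar> ^ 2 * norm (\<xi> x) \<le> C2" using D(2)[rule_format, of 2 0] D(1) by auto
  have C0p: "C0 \<ge> 0" using C0[of 0] norm_ge_zero[of "\<xi> 0"] by linarith
  have m[measurable]: "\<xi> \<in> borel_measurable borel" by (rule schwartz_meas[OF assms])
  have bnd: "(norm (\<xi> x))\<^sup>2 \<le> C0 * (C0 + C2) * inverse (1 + x\<^sup>2)" for x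
  proof -
    have "(1 + x\<^sup>2) * norm (\<xi> x) \<le> C0 + C2" using C0[of x] C2[of x] by (simp add: algebra_simps)
    then have "norm (\<xi> x) \<le> (C0 + C2) * inverse (1 + x\<^sup>2)"
      by (simp add: field_simps add_pos_nonneg)
    then have "norm (\<xi> x) * norm (\<xi> x) \<le> C0 * ((C0 + C2) * inverse (1 + x\<^sup>2))"
      using C0[of x] C0p by (intro mult_mono) auto
    then show ?thesis by (simp add: power2_eq_square mult_ac)
  qed
  have i: "integrable lborel (\<lambda>x. inverse (1 + x\<^sup>2) :: real)"
    using integrable_inverse_1_plus_square by (simp add: set_integrable_def)
  have "integrable lborel (\<lambda>x. (norm (\<xi> x))\<^sup>2)"
  proof (rule Bochner_Integration.integrable_bound[OF integrable_mult_right[OF i, of "C0 * (C0 + C2)"]])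
    show "(\<lambda>x. (norm (\<xi> x))\<^sup>2) \<in> borel_measurable lborel" by measurable
    show "AE x in lborel. norm ((norm (\<xi> x))\<^sup>2) \<le> norm (C0 * (C0 + C2) * inverse (1 + x\<^sup>2))"
      using bnd by (intro AE_I2) (auto intro: order_trans[OF _ abs_ge_self])
  qed
  then show ?thesis by (simp add: L2_def)
qed

locale silxi = silctx +
  fixes \<xi> :: "real \<Rightarrow> complex"
  assumes sch: "schwartzC \<xi>"
begin

lemma xi_meas[measurable]: "\<xi> \<in> borel_measurable lborel"
  using schwartz_meas[OF sch] by simp

definition Nxi :: real where "Nxi = l2norm (\<lambda>y. norm (\<xi> y))"

lemma Nxi_nonneg: "Nxi \<ge> 0" by (simp add: Nxi_def l2norm_nonneg)

lemma cp_facts: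
  assumes p: "p \<in> simplex2 T"
  shows "integrable lborel (\<lambda>y. complex_of_real (Ap f p y) * \<xi> y)"
    and "integrable lborel (\<lambda>y. \<bar>Ap f p y\<bar> * norm (\<xi> y))"
    and "(\<integral>y. \<bar>Ap f p y\<bar> * norm (\<xi> y) \<partial>lborel) \<le> Np f p * Nxi"
    and "norm (cpair \<xi> (Ap f p)) \<le> Np f p * Nxi"
proof -
  have L: "L2 (Ap f p)" by (rule L2_Ap_S[OF p])
  have Lx: "L2 (\<lambda>y. norm (\<xi> y))" by (rule schwartz_L2[OF sch])
  show ia: "integrable lborel (\<lambda>y. \<bar>Ap f p y\<bar> * norm (\<xi> y))"
    using integrable_abs[OF L2_integrable_mult[OF L Lx]] by (simp add: abs_mult)
  show ic: "integrable lborel (\<lambda>y. complex_of_real (Ap f p y) * \<xi> y)"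
  proof (rule Bochner_Integration.integrable_bound[OF ia])
    show "(\<lambda>y. complex_of_real (Ap f p y) * \<xi> y) \<in> borel_measurable lborel" by measurable
  qed (auto simp: norm_mult)
  show b: "(\<integral>y. \<bar>Ap f p y\<bar> * norm (\<xi> y) \<partial>lborel) \<le> Np f p * Nxi"
    using L2_CS[OF L Lx] by (simp add: Np_def Nxi_def abs_mult)
  have "norm (cpair \<xi> (Ap f p)) \<le> (\<integral>y. norm (\<xi> y * complex_of_real (Ap f p y)) \<partial>lborel)"
    unfolding cpair_def by (rule integral_norm_bound)
  also have "\<dots> = (\<integral>y. \<bar>Ap f p y\<bar> * norm (\<xi> y) \<partial>lborel)"
    by (simp add: norm_mult mult.commute)
  finally show "norm (cpair \<xi> (Ap f p)) \<le> Np f p * Nxi" using b by linarith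
qed

lemma cpair_meas[measurable]: "(\<lambda>p. cpair \<xi> (Ap f p)) \<in> borel_measurable MM"
proof -
  have "(\<lambda>z. \<xi> (snd z) * complex_of_real (Ap f (fst z) (snd z))) \<in> borel_measurable (MM \<Otimes>\<^sub>M lborel)"
    by measurable
  then have "(\<lambda>p. \<integral>y. \<xi> y * complex_of_real (Ap f p y) \<partial>lborel) \<in> borel_measurable MM"
    by (intro lborel.borel_measurable_lebesgue_integral) (simp add: case_prod_beta')
  then show ?thesis by (simp add: cpair_def)
qed

lemma inv_pow_cancel1:
  fixes a b :: real assumes "a \<ge> 0"
  shows "inverse a ^ Suc n * (a * b) ^ n = b ^ n * inverse a"
proof (cases "a = 0")
  case False
  then show ?thesis by (simp add: power_mult_distrib power_inverse field_simps)
qed auto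

lemma Z_nn:
  "(\<integral>\<^sup>+x. ennreal (norm (complex_of_real (K n p x) * (\<Prod>i<n. \<xi> (x i)))) \<partial>Rn n)
     \<le> ennreal (Nxi ^ n * (indicator (simplex2 T) p * inverse (Np f p)))"
proof (cases "p \<in> simplex2 T")
  case False
  then show ?thesis by (simp add: K_def)
next
  case True
  define c where "c = inverse (Np f p) ^ Suc n"
  define I where "I = (\<integral>y. \<bar>Ap f p y\<bar> * norm (\<xi> y) \<partial>lborel)"
  have c0: "c \<ge> 0" by (simp add: c_def Np_nonneg)
  have I0: "I \<ge> 0" by (simp add: I_def)
  have "norm (complex_of_real (K n p x) * (\<Prod>i<n. \<xi> (x i))) = c * (\<Prod>i<n. \<bar>Ap f p (x i)\<bar> * norm (\<xi> (x i)))" for x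
  proof -
    have "norm (complex_of_real (K n p x) * (\<Prod>i<n. \<xi> (x i))) = \<bar>K n p x\<bar> * (\<Prod>i<n. norm (\<xi> (x i)))"
      by (simp add: norm_mult prod_norm)
    also have "\<bar>K n p x\<bar> = c * (\<Prod>i<n. \<bar>Ap f p (x i)\<bar>)"
      using True c0 Np_nonneg[of p] by (simp add: K_def c_def abs_mult abs_prod)
    finally show ?thesis by (simp add: prod.distrib mult_ac)
  qed
  note neq = this
  have "(\<integral>\<^sup>+x. ennreal (norm (complex_of_real (K n p x) * (\<Prod>i<n. \<xi> (x i)))) \<partial>Rn n)
      = (\<integral>\<^sup>+x. ennreal c * (\<Prod>i<n. ennreal (\<bar>Ap f p (x i)\<bar> * norm (\<xi> (x i)))) \<partial>Rn n)"
  proof (intro nn_integral_cong)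
    fix x
    have "ennreal (norm (complex_of_real (K n p x) * (\<Prod>i<n. \<xi> (x i))))
        = ennreal (c * (\<Prod>i<n. \<bar>Ap f p (x i)\<bar> * norm (\<xi> (x i))))" by (simp only: neq)
    also have "\<dots> = ennreal c * ennreal (\<Prod>i<n. \<bar>Ap f p (x i)\<bar> * norm (\<xi> (x i)))"
      by (rule ennreal_mult) (auto intro: c0 prod_nonneg)
    also have "ennreal (\<Prod>i<n. \<bar>Ap f p (x i)\<bar> * norm (\<xi> (x i))) = (\<Prod>i<n. ennreal (\<bar>Ap f p (x i)\<bar> * norm (\<xi> (x i))))"
      by (rule prod_ennreal[symmetric]) simp
    finally show "ennreal (norm (complex_of_real (K n p x) * (\<Prod>i<n. \<xi> (x i))))
        = ennreal c * (\<Prod>i<n. ennreal (\<bar>Ap f p (x i)\<bar> * norm (\<xi> (x i))))" .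
  qed
  also have "\<dots> = ennreal c * (\<integral>\<^sup>+x. (\<Prod>i<n. ennreal (\<bar>Ap f p (x i)\<bar> * norm (\<xi> (x i)))) \<partial>Rn n)"
    by (rule nn_integral_cmult) measurable
  also have "(\<integral>\<^sup>+x. (\<Prod>i<n. ennreal (\<bar>Ap f p (x i)\<bar> * norm (\<xi> (x i)))) \<partial>Rn n)
      = (\<integral>\<^sup>+y. ennreal (\<bar>Ap f p y\<bar> * norm (\<xi> y)) \<partial>lborel) ^ n"
    by (rule prod_nn_integral_pow[of "\<lambda>y. ennreal (\<bar>Ap f p y\<bar> * norm (\<xi> y))"]) measurable
  also have "(\<integral>\<^sup>+y. ennreal (\<bar>Ap f p y\<bar> * norm (\<xi> y)) \<partial>lborel) = ennreal I"
    unfolding I_def using cp_facts(2)[OF True] by (intro nn_integral_eq_integral) auto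
  also have "ennreal c * ennreal I ^ n = ennreal (c * I ^ n)"
    using c0 I0 by (simp add: ennreal_mult ennreal_power)
  also have "c * I ^ n \<le> c * (Np f p * Nxi) ^ n"
    using cp_facts(3)[OF True] I0 c0 by (intro mult_left_mono power_mono) (auto simp: I_def)
  also have "\<dots> = Nxi ^ n * inverse (Np f p)"
    unfolding c_def by (rule inv_pow_cancel1) (simp add: Np_nonneg)
  finally show ?thesis using True by (simp add: ennreal_leI)
qed

lemma invN_integrable: "integrable MM (\<lambda>p. indicator (simplex2 T) p * inverse (Np f p))"
proof (rule integrableI_bounded)
  show "(\<lambda>p. indicator (simplex2 T) p * inverse (Np f p)) \<in> borel_measurable MM" by measurable
  have "(\<integral>\<^sup>+ p. ennreal (norm (indicator (simplex2 T) p * inverse (Np f p))) \<partial>MM)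
      = (\<integral>\<^sup>+ p. indicator (simplex2 T) p * ennreal (inverse (Np f p)) \<partial>MM)"
    by (intro nn_integral_cong) (simp add: indicator_def Np_nonneg)
  also have "\<dots> < \<infinity>" by (rule I1fin)
  finally show "(\<integral>\<^sup>+ p. ennreal (norm (indicator (simplex2 T) p * inverse (Np f p))) \<partial>MM) < \<infinity>" .
qed

lemma Z_integrable:
  "integrable (Rn n \<Otimes>\<^sub>M MM) (case_prod (\<lambda>x p. complex_of_real (K n p x) * (\<Prod>i<n. \<xi> (x i))))"
proof (rule integrableI_bounded)
  interpret P: pair_sigma_finite "Rn n" MM by (intro pair_sf Rn_sf MMsf)
  have Zm: "case_prod (\<lambda>x p. complex_of_real (K n p x) * (\<Prod>i<n. \<xi> (x i))) \<in> borel_measurable (Rn n \<Otimes>\<^sub>M MM)"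
  proof -
    have [measurable]: "(\<lambda>z. K n (snd z) (fst z)) \<in> borel_measurable (Rn n \<Otimes>\<^sub>M MM)"
      unfolding K_def by measurable
    have [measurable]: "i \<in> {..<n} \<Longrightarrow> (\<lambda>x. \<xi> (x i)) \<in> borel_measurable (Rn n)" for i
      by measurable
    show ?thesis by (simp add: case_prod_beta') measurable
  qed
  then show "case_prod (\<lambda>x p. complex_of_real (K n p x) * (\<Prod>i<n. \<xi> (x i))) \<in> borel_measurable (Rn n \<Otimes>\<^sub>M MM)" .
  have "(\<integral>\<^sup>+ z. ennreal (norm (case_prod (\<lambda>x p. complex_of_real (K n p x) * (\<Prod>i<n. \<xi> (x i))) z)) \<partial>(Rn n \<Otimes>\<^sub>M MM))
      = (\<integral>\<^sup>+ p. (\<integral>\<^sup>+ x. ennreal (norm (complex_of_real (K n p x) * (\<Prod>i<n. \<xi> (x i)))) \<partial>Rn n) \<partial>MM)"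
    by (subst P.nn_integral_snd[symmetric]) (use Zm in auto)
  also have "\<dots> \<le> (\<integral>\<^sup>+ p. ennreal (Nxi ^ n * (indicator (simplex2 T) p * inverse (Np f p))) \<partial>MM)"
    by (intro nn_integral_mono Z_nn)
  also have "\<dots> < \<infinity>"
  proof -
    have nn: "0 \<le> Nxi ^ n * (indicator (simplex2 T) p * inverse (Np f p))" for p
      by (simp add: Nxi_nonneg Np_nonneg)
    have "(\<integral>\<^sup>+ p. ennreal (norm (Nxi ^ n * (indicator (simplex2 T) p * inverse (Np f p)))) \<partial>MM) < \<infinity>"
      using integrable_mult_right[OF invN_integrable, of "Nxi ^ n"] by (simp only: integrable_iff_bounded)
    moreover have "norm (Nxi ^ n * (indicator (simplex2 T) p * inverse (Np f p))) = Nxi ^ n * (indicator (simplex2 T) p * inverse (Np f p))" for p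
      using nn[of p] by simp
    ultimately show ?thesis by simp
  qed
  finally show "(\<integral>\<^sup>+ z. ennreal (norm (case_prod (\<lambda>x p. complex_of_real (K n p x) * (\<Prod>i<n. \<xi> (x i))) z)) \<partial>(Rn n \<Otimes>\<^sub>M MM)) < \<infinity>" .
qed

lemma inner_Z:
  "(\<integral>x. complex_of_real (K n p x) * (\<Prod>i<n. \<xi> (x i)) \<partial>Rn n)
     = complex_of_real (indicator (simplex2 T) p * inverse (Np f p) ^ Suc n) * (cpair \<xi> (Ap f p)) ^ n"
proof (cases "p \<in> simplex2 T")
  case False
  then show ?thesis by (simp add: K_def)
next
  case True
  have "complex_of_real (K n p x) * (\<Prod>i<n. \<xi> (x i))
      = complex_of_real (indicator (simplex2 T) p * inverse (Np f p) ^ Suc n) * (\<Prod>i<n. complex_of_real (Ap f p (x i)) * \<xi> (x i))" for x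
    by (simp add: K_def prod.distrib mult_ac)
  then have "(\<integral>x. complex_of_real (K n p x) * (\<Prod>i<n. \<xi> (x i)) \<partial>Rn n)
      = complex_of_real (indicator (simplex2 T) p * inverse (Np f p) ^ Suc n) * (\<integral>x. (\<Prod>i<n. complex_of_real (Ap f p (x i)) * \<xi> (x i)) \<partial>Rn n)"
    by simp
  also have "(\<integral>x. (\<Prod>i<n. complex_of_real (Ap f p (x i)) * \<xi> (x i)) \<partial>Rn n)
      = (\<integral>y. complex_of_real (Ap f p y) * \<xi> y \<partial>lborel) ^ n"
    by (rule prod_integral_pow[OF cp_facts(1)[OF True]])
  also have "(\<integral>y. complex_of_real (Ap f p y) * \<xi> y \<partial>lborel) = cpair \<xi> (Ap f p)"
    by (simp add: cpair_def mult.commute)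
  finally show ?thesis .
qed

lemma tensor_eq:
  "tensor_pair n (Phi n) \<xi> = complex_of_real (coef n) *
     (\<integral>p. complex_of_real (indicator (simplex2 T) p * inverse (Np f p) ^ Suc n) * (cpair \<xi> (Ap f p)) ^ n \<partial>MM)"
proof -
  interpret P: pair_sigma_finite "Rn n" MM by (intro pair_sf Rn_sf MMsf)
  have pt: "complex_of_real (Phi n x) * (\<Prod>i<n. \<xi> (x i))
      = complex_of_real (coef n) * (\<integral>p. complex_of_real (K n p x) * (\<Prod>i<n. \<xi> (x i)) \<partial>MM)" for x
  proof -
    have "complex_of_real (Phi n x) = complex_of_real (coef n) * (\<integral>p. complex_of_real (K n p x) \<partial>MM)"
      by (simp add: Phi_def)
    then show ?thesis by simp
  qed
  have "tensor_pair n (Phi n) \<xi> = (\<integral>x. complex_of_real (coef n) * (\<integral>p. complex_of_real (K n p x) * (\<Prod>i<n. \<xi> (x i)) \<partial>MM) \<partial>Rn n)"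
    unfolding tensor_pair_def pt ..
  also have "\<dots> = complex_of_real (coef n) * (\<integral>x. (\<integral>p. complex_of_real (K n p x) * (\<Prod>i<n. \<xi> (x i)) \<partial>MM) \<partial>Rn n)"
    by simp
  also have "(\<integral>x. (\<integral>p. complex_of_real (K n p x) * (\<Prod>i<n. \<xi> (x i)) \<partial>MM) \<partial>Rn n)
      = (\<integral>p. (\<integral>x. complex_of_real (K n p x) * (\<Prod>i<n. \<xi> (x i)) \<partial>Rn n) \<partial>MM)"
    by (rule P.Fubini_integral[OF Z_integrable, symmetric])
  also have "\<dots> = (\<integral>p. complex_of_real (indicator (simplex2 T) p * inverse (Np f p) ^ Suc n) * (cpair \<xi> (Ap f p)) ^ n \<partial>MM)"
    by (simp add: inner_Z)
  finally show ?thesis .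
qed

end

lemma coef_abs_pow:
  "\<bar>coef n\<bar> * X ^ n = (if even n then (1 / sqrt (2 * pi)) * ((X\<^sup>2 / 2) ^ (n div 2) / fact (n div 2)) else 0)"
proof (cases "even n")
  case True
  then obtain m where n: "n = 2 * m" by blast
  have a: "\<bar>coef n\<bar> = 1 / (sqrt (2 * pi) * 2 ^ m * fact m)"
    unfolding n coef_def by (simp add: abs_mult abs_divide)
  have b: "X ^ n = (X\<^sup>2) ^ m" unfolding n by (simp add: power_mult)
  have c: "(X\<^sup>2 / 2) ^ m = (X\<^sup>2) ^ m / 2 ^ m" by (simp add: power_divide)
  have d: "n div 2 = m" unfolding n by simp
  show ?thesis unfolding a b c d using True by simp
next
  case False
  then show ?thesis unfolding coef_def by simp
qed

lemma exp_real_sums: "(\<lambda>m. x ^ m / fact m) sums exp (x::real)"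
proof -
  have "(\<lambda>m. x ^ m /\<^sub>R fact m) sums exp x" by (rule exp_converges)
  moreover have "x ^ m /\<^sub>R fact m = x ^ m / fact m" for m
    by (simp add: divide_inverse_commute)
  ultimately show ?thesis by simp
qed

lemma coef_summable: "summable (\<lambda>n. \<bar>coef n\<bar> * X ^ n)"
proof -
  have "(\<lambda>m. (1 / sqrt (2 * pi)) * ((X\<^sup>2 / 2) ^ m / fact m)) sums ((1 / sqrt (2 * pi)) * exp (X\<^sup>2 / 2))"
    by (rule sums_mult[OF exp_real_sums])
  from sums_even_reindex[OF this] have "summable (\<lambda>n. if even n then (1 / sqrt (2 * pi)) * ((X\<^sup>2 / 2) ^ (n div 2) / fact (n div 2)) else 0)"
    by (rule sums_summable)
  then show ?thesis unfolding coef_abs_pow .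
qed

lemma real_id_aux:
  fixes a b s P F N :: real
  shows "a / (s * P * F) * (inverse N * b) = 1 / (s * N) * (a * inverse P * b / F)"
  by (simp add: divide_inverse inverse_mult_distrib mult_ac)

lemma donsker_series:
  fixes N :: real and c :: complex
  assumes N: "N \<ge> 0"
  shows "(\<lambda>n. complex_of_real (coef n) * (complex_of_real (inverse N ^ Suc n) * c ^ n))
    sums (complex_of_real (1 / (sqrt (2 * pi) * N)) * exp (- c\<^sup>2 / complex_of_real (2 * N\<^sup>2)))"
proof (cases "N = 0")
  case True
  have "(\<lambda>n. complex_of_real (coef n) * (complex_of_real (inverse N ^ Suc n) * c ^ n)) = (\<lambda>n. 0)"
    using True by simp
  moreover have "complex_of_real (1 / (sqrt (2 * pi) * N)) = 0"
    using True by simp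
  ultimately show ?thesis by (simp only: mult_zero_left sums_zero)
next
  case False
  with N have Np: "N > 0" by simp
  define A where "A = complex_of_real (1 / (sqrt (2 * pi) * N))"
  define q where "q = - inverse (2 * N\<^sup>2)"
  define z where "z = - c\<^sup>2 / complex_of_real (2 * N\<^sup>2)"
  have zeq: "z = complex_of_real q * c\<^sup>2"
  proof -
    have "complex_of_real q = - inverse (complex_of_real (2 * N\<^sup>2))"
      unfolding q_def by (simp only: of_real_minus of_real_inverse)
    then show ?thesis unfolding z_def
      by (simp only: divide_inverse mult_minus_left mult_minus_right mult.commute)
  qed
  have s: "(\<lambda>m. A * (z ^ m /\<^sub>R fact m)) sums (A * exp z)"
    by (intro sums_mult exp_converges)
  have eq: "complex_of_real (coef n) * (complex_of_real (inverse N ^ Suc n) * c ^ n)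
      = (if even n then A * (z ^ (n div 2) /\<^sub>R fact (n div 2)) else 0)" for n
  proof (cases "even n")
    case True
    then obtain m where n: "n = 2 * m" by blast
    have nd: "n div 2 = m" by (simp add: n)
    have c1: "coef n = (-1) ^ m / (sqrt (2 * pi) * 2 ^ m * fact m)"
      by (simp add: coef_def n)
    have c2: "inverse N ^ Suc n = inverse N * inverse (N\<^sup>2) ^ m"
      by (simp add: n power_mult power_inverse)
    have c3: "q ^ m = (-1) ^ m * inverse (2 ^ m) * inverse (N\<^sup>2) ^ m"
    proof -
      have "q = (-1) * (inverse 2 * inverse (N\<^sup>2))" by (simp add: q_def)
      then show ?thesis by (simp only: power_mult_distrib power_inverse mult.assoc)
    qed
    have r: "coef n * inverse N ^ Suc n = 1 / (sqrt (2 * pi) * N) * (q ^ m / fact m)"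
      unfolding c1 c2 c3 by (rule real_id_aux)
    have "complex_of_real (coef n) * (complex_of_real (inverse N ^ Suc n) * c ^ n)
        = complex_of_real (coef n * inverse N ^ Suc n) * (c\<^sup>2) ^ m"
      unfolding n power_mult by (simp only: of_real_mult mult.assoc)
    also have "\<dots> = complex_of_real (1 / (sqrt (2 * pi) * N)) * (complex_of_real (inverse (fact m)) * (complex_of_real (q ^ m) * (c\<^sup>2) ^ m))"
      unfolding r by (simp only: divide_inverse of_real_mult) (simp only: mult_ac)
    also have "\<dots> = A * (z ^ m /\<^sub>R fact m)"
      unfolding A_def zeq by (simp only: scaleR_conv_of_real power_mult_distrib of_real_power)
    finally show ?thesis using True nd by simp
  qed (simp add: coef_def)
  have fe: "(\<lambda>n. complex_of_real (coef n) * (complex_of_real (inverse N ^ Suc n) * c ^ n))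
      = (\<lambda>n. if even n then A * (z ^ (n div 2) /\<^sub>R fact (n div 2)) else 0)"
    by (rule ext, rule eq)
  show ?thesis unfolding fe A_def[symmetric] z_def[symmetric] by (rule sums_even_reindex[OF s])
qed

context silxi begin

definition fn :: "nat \<Rightarrow> real \<times> real \<Rightarrow> complex" where
  "fn n p = complex_of_real (coef n) *
     (complex_of_real (indicator (simplex2 T) p * inverse (Np f p) ^ Suc n) * (cpair \<xi> (Ap f p)) ^ n)"

lemma fn_meas[measurable]: "fn n \<in> borel_measurable MM"
  unfolding fn_def by measurable

lemma fn_bound: "norm (fn n p) \<le> \<bar>coef n\<bar> * Nxi ^ n * (indicator (simplex2 T) p * inverse (Np f p))"
proof (cases "p \<in> simplex2 T")
  case False
  then show ?thesis by (simp add: fn_def)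
next
  case True
  have nn: "0 \<le> inverse (Np f p) ^ Suc n" by (simp add: Np_nonneg)
  have "norm (fn n p) = \<bar>coef n\<bar> * (inverse (Np f p) ^ Suc n * norm (cpair \<xi> (Ap f p)) ^ n)"
    using True nn unfolding fn_def by (simp only: norm_mult norm_of_real norm_power indicator_simps mult_1_left abs_of_nonneg)
  also have "\<dots> \<le> \<bar>coef n\<bar> * (inverse (Np f p) ^ Suc n * (Np f p * Nxi) ^ n)"
    using cp_facts(4)[OF True] nn by (intro mult_left_mono power_mono) auto
  also have "inverse (Np f p) ^ Suc n * (Np f p * Nxi) ^ n = Nxi ^ n * inverse (Np f p)"
    by (rule inv_pow_cancel1) (simp add: Np_nonneg)
  finally show ?thesis using True by (simp add: mult_ac)
qed

lemma bound_integrable: "integrable MM (\<lambda>p. \<bar>coef n\<bar> * Nxi ^ n * (indicator (simplex2 T) p * inverse (Np f p)))"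
  by (rule integrable_mult_right[OF invN_integrable])

lemma fn_int: "integrable MM (fn n)"
proof (rule Bochner_Integration.integrable_bound[OF bound_integrable])
  show "fn n \<in> borel_measurable MM" by measurable
  show "AE x in MM. norm (fn n x) \<le> norm (\<bar>coef n\<bar> * Nxi ^ n * (indicator (simplex2 T) x * inverse (Np f x)))"
    by (intro AE_I2 order_trans[OF fn_bound]) simp
qed

lemma fn_series:
  shows "integrable MM (\<lambda>p. \<Sum>n. fn n p)"
    and "(\<lambda>n. integral\<^sup>L MM (fn n)) sums (\<integral>p. (\<Sum>n. fn n p) \<partial>MM)"
proof -
  define I where "I = (\<integral>p. indicator (simplex2 T) p * inverse (Np f p) \<partial>MM)"
  have s1: "AE p in MM. summable (\<lambda>n. norm (fn n p))"
  proof (intro AE_I2)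
    fix p
    have "summable (\<lambda>n. \<bar>coef n\<bar> * Nxi ^ n * (indicator (simplex2 T) p * inverse (Np f p)))"
      by (intro summable_mult2 coef_summable)
    then show "summable (\<lambda>n. norm (fn n p))"
      by (rule summable_comparison_test'[where N=0]) (simp add: fn_bound)
  qed
  have s2: "summable (\<lambda>n. \<integral>p. norm (fn n p) \<partial>MM)"
  proof -
    have "summable (\<lambda>n. \<bar>coef n\<bar> * Nxi ^ n * I)"
      by (intro summable_mult2 coef_summable)
    moreover have "norm (\<integral>p. norm (fn n p) \<partial>MM) \<le> \<bar>coef n\<bar> * Nxi ^ n * I" for n
    proof -
      have "(\<integral>p. norm (fn n p) \<partial>MM) \<le> (\<integral>p. \<bar>coef n\<bar> * Nxi ^ n * (indicator (simplex2 T) p * inverse (Np f p)) \<partial>MM)"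
        using fn_int[of n] bound_integrable[of n] by (intro integral_mono fn_bound) auto
      also have "\<dots> = \<bar>coef n\<bar> * Nxi ^ n * I" by (simp add: I_def)
      finally show ?thesis by simp
    qed
    ultimately show ?thesis by (rule summable_comparison_test'[where N=0])
  qed
  show "integrable MM (\<lambda>p. \<Sum>n. fn n p)"
    by (rule integrable_suminf[OF fn_int s1 s2])
  show "(\<lambda>n. integral\<^sup>L MM (fn n)) sums (\<integral>p. (\<Sum>n. fn n p) \<partial>MM)"
    by (rule sums_integral[OF fn_int s1 s2])
qed

lemma sil_eq: "sil_integrand f \<xi> p = S_donsker (Ap f p) \<xi>"
  by (cases p) (simp add: sil_integrand_def Ap_def)

lemma fn_sum_pt: "(\<lambda>n. fn n p) sums (indicator (simplex2 T) p *\<^sub>R sil_integrand f \<xi> p)"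
proof (cases "p \<in> simplex2 T")
  case False
  then have "(\<lambda>n. fn n p) = (\<lambda>n. 0)" by (simp add: fn_def)
  moreover have "indicator (simplex2 T) p *\<^sub>R sil_integrand f \<xi> p = 0" using False by simp
  ultimately show ?thesis by (simp only: sums_zero)
next
  case True
  have "(\<lambda>n. fn n p) = (\<lambda>n. complex_of_real (coef n) * (complex_of_real (inverse (Np f p) ^ Suc n) * (cpair \<xi> (Ap f p)) ^ n))"
    using True by (simp only: fn_def indicator_simps mult_1_left)
  moreover have "indicator (simplex2 T) p *\<^sub>R sil_integrand f \<xi> p =
      complex_of_real (1 / (sqrt (2 * pi) * Np f p)) * exp (- (cpair \<xi> (Ap f p))\<^sup>2 / complex_of_real (2 * (Np f p)\<^sup>2))"
    using True by (simp only: indicator_simps scaleR_one sil_eq S_donsker_def Np_def)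
  ultimately show ?thesis using donsker_series[OF Np_nonneg] by simp
qed

lemma part_xi:
  shows "set_integrable MM (simplex2 T) (sil_integrand f \<xi>)"
    and "(\<lambda>n. tensor_pair n (Phi n) \<xi>) sums S_SIL T f \<xi>"
proof -
  have eqf: "(\<lambda>p. \<Sum>n. fn n p) = (\<lambda>p. indicator (simplex2 T) p *\<^sub>R sil_integrand f \<xi> p)"
    by (rule ext) (rule sums_unique[OF fn_sum_pt, symmetric])
  show "set_integrable MM (simplex2 T) (sil_integrand f \<xi>)"
    unfolding set_integrable_def using fn_series(1) by (simp only: eqf)
  have te: "tensor_pair n (Phi n) \<xi> = integral\<^sup>L MM (fn n)" for n
    unfolding tensor_eq fn_def by (rule integral_mult_right_zero[symmetric])
  show "(\<lambda>n. tensor_pair n (Phi n) \<xi>) sums S_SIL T f \<xi>"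
    unfolding te S_SIL_def set_lebesgue_integral_def using fn_series(2) by (simp only: eqf)
qed

end

context silctx begin

lemma K_perm:
  assumes "\<pi> permutes {..<n}"
  shows "K n p (x \<circ> \<pi>) = K n p x"
proof -
  have "(\<Prod>i<n. Ap f p ((x \<circ> \<pi>) i)) = (\<Prod>i<n. Ap f p (x i))"
    using prod.permute[OF assms, of "\<lambda>i. Ap f p (x i)"] by (simp add: comp_def)
  then show ?thesis by (simp add: K_def)
qed

lemma Phi_sym: "sym_L2_kernel n (Phi n)"
  unfolding sym_L2_kernel_def
proof (intro conjI allI impI ballI)
  show "Phi n \<in> borel_measurable (Rn n)" by (rule Phi_meas)
  show "integrable (Rn n) (\<lambda>x. (Phi n x)\<^sup>2)" by (rule Phi_sq(1))
  fix \<pi> x assume "\<pi> permutes {..<n}"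
  then show "Phi n (x \<circ> \<pi>) = Phi n x" by (simp add: Phi_def K_perm)
qed

end

theorem theorem3p6:
  fixes T M :: real and f :: "real \<Rightarrow> real \<Rightarrow> real"
  assumes "T > 0"
    and "(\<lambda>(t, x). f t x) \<in> borel_measurable (lborel \<Otimes>\<^sub>M lborel)"
    and "\<forall>t\<in>{0..T}. L2 (f t)"
    and "AE p in lborel \<Otimes>\<^sub>M lborel. p \<in> {0..T} \<times> {0..T} \<longrightarrow>
           0 < l2norm (fdiff f (fst p) (snd p)) \<and> l2norm (fdiff f (fst p) (snd p)) \<le> M"
    and "(\<integral>\<^sup>+ q. indicator (simplex2 T \<times> simplex2 T) q * gram_integrand f q
           \<partial>((lborel \<Otimes>\<^sub>M lborel) \<Otimes>\<^sub>M (lborel \<Otimes>\<^sub>M lborel))) < \<infinity>"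
  shows "(\<forall>\<xi>. schwartzC \<xi> \<longrightarrow>
            set_integrable (lborel \<Otimes>\<^sub>M lborel) (simplex2 T) (sil_integrand f \<xi>))
         \<and> in_D 1 (S_SIL T f)"
proof -
  have I1: "(\<integral>\<^sup>+ p. indicator (simplex2 T) p * ennreal (inverse (Np f p)) \<partial>(lborel \<Otimes>\<^sub>M lborel)) < \<infinity>"
    by (rule I1_finite[OF assms(2) assms(5)])
  have sc: "silctx T f" by (rule silctx.intro[OF assms(2) assms(3) I1])
  have nAE: "AE p in lborel \<Otimes>\<^sub>M lborel. p \<in> {0..T} \<times> {0..T} \<longrightarrow> Np f p \<le> M"
    using assms(4) by (rule eventually_mono) (auto simp: Np_def Ap_def)
  have sc2: "silctx2 T f M" by (rule silctx2.intro[OF sc silctx2_axioms.intro[OF nAE assms(5)]])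
  have X: "silxi T f \<xi>" if "schwartzC \<xi>" for \<xi>
    by (rule silxi.intro[OF sc silxi_axioms.intro[OF that]])
  show ?thesis
  proof (intro conjI allI impI)
    fix \<xi> :: "real \<Rightarrow> complex" assume "schwartzC \<xi>"
    then show "set_integrable (lborel \<Otimes>\<^sub>M lborel) (simplex2 T) (sil_integrand f \<xi>)"
      using silxi.part_xi(1)[OF X] by blast
  next
    show "in_D 1 (S_SIL T f)"
      unfolding in_D_def
    proof (intro exI conjI allI impI)
      show "sym_L2_kernel n (silctx.Phi T f n)" for n by (rule silctx.Phi_sym[OF sc])
      show "summable (\<lambda>n. (1 + real n powr 1) * fact n * knorm2 n (silctx.Phi T f n))"
        by (rule silctx2.summable_main[OF sc2])
      fix \<xi> :: "real \<Rightarrow> complex" assume "schwartzC \<xi>"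
      then show "(\<lambda>n. tensor_pair n (silctx.Phi T f n) \<xi>) sums S_SIL T f \<xi>"
        using silxi.part_xi(2)[OF X] by blast
    qed
  qed
qed

end
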